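(* Let $p\ge 2$ and $n\ge 1$ be integers, let $u\in C^2([0,1])$ with $m_2\le u''(x)\le M_2$ for all $x\in[0,1]$ (real constants $m_2\le M_2$), let $0=x_0<x_1<\dots<x_{N+1}=1$ be a partition with $h_i=x_{i+1}-x_i$ and $h=\max_{0\le i\le N}h_i$, and let $u_I$ be the $P_1$-interpolant of $u$ on this partition. Then $$\|u-u_I\|_{1,p}^p\le\frac{(n+2)^{p-1}}{p+1}\left(\frac{1}{2^{p-1}n^p}+\frac{2S_p^*(n)}{n^{2p+1}}\right)\left(h^p+\frac{h^{2p}}{p}\right)\|u''\|_\infty^p+\frac{1}{3n}\left(\frac38\right)^p\left(h^p+\frac{h^{2p}}{p}\right)(M_2-m_2)^p,$$ where $S_p^*(n)=\sum_{k=1}^{n-1}k^{p+1}$ for $n\ge2$ and $S_p^*(1)=0$.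
   Context: $u_I$ is the continuous function on $[0,1]$ that is affine on each $[x_i,x_{i+1}]$ and satisfies $u_I(x_i)=u(x_i)$ for $i=0,\dots,N+1$. For $v\in W^{1,p}(]0,1[)$, $\|v\|_{0,p}=\left(\int_0^1|v(x)|^p\,dx\right)^{1/p}$ and $\|v\|_{1,p}=\left(\|v\|_{0,p}^p+\|v'\|_{0,p}^p\right)^{1/p}$, with $v'$ the weak derivative. $\|u''\|_\infty=\sup_{x\in[0,1]}|u''(x)|$. *)

theory Defs
  imports "HOL-Analysis.Analysis"
begin

definition test_fun_01 :: "(real \<Rightarrow> real) \<Rightarrow> bool" where
  "test_fun_01 \<phi> \<longleftrightarrow>
     (\<forall>k t. ((deriv ^^ k) \<phi>) differentiable (at t)) \<and>
     (\<exists>a b. 0 < a \<and> b < 1 \<and> (\<forall>t. t \<notin> {a..b} \<longrightarrow> \<phi> t = 0))"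

definition is_weak_deriv_01 :: "(real \<Rightarrow> real) \<Rightarrow> (real \<Rightarrow> real) \<Rightarrow> bool" where
  "is_weak_deriv_01 v g \<longleftrightarrow>
     set_integrable lborel {0<..<1} v \<and> set_integrable lborel {0<..<1} g \<and>
     (\<forall>\<phi>. test_fun_01 \<phi> \<longrightarrow>
        (LINT t:{0<..<1}|lborel. v t * deriv \<phi> t) = - (LINT t:{0<..<1}|lborel. g t * \<phi> t))"

definition weak_deriv_01 :: "(real \<Rightarrow> real) \<Rightarrow> (real \<Rightarrow> real)" where
  "weak_deriv_01 v = (SOME g. is_weak_deriv_01 v g)"

definition norm_0p :: "real \<Rightarrow> (real \<Rightarrow> real) \<Rightarrow> real" where
  "norm_0p p v = (LINT t:{0<..<1}|lborel. \<bar>v t\<bar> powr p) powr (1 / p)"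

definition norm_1p :: "real \<Rightarrow> (real \<Rightarrow> real) \<Rightarrow> real" where
  "norm_1p p v = (norm_0p p v powr p + norm_0p p (weak_deriv_01 v) powr p) powr (1 / p)"

definition S_star :: "nat \<Rightarrow> nat \<Rightarrow> real" where
  "S_star p n = (\<Sum>k=1..<n. real k ^ (p + 1))"

end

theory Submission
  imports Defs "HOL-Computational_Algebra.Polynomial"
begin

definition smooth :: "(real \<Rightarrow> real) \<Rightarrow> bool" where
  "smooth f \<longleftrightarrow> (\<forall>k t. ((deriv ^^ k) f) differentiable (at t))"

lemma smooth_class:
  assumes "\<And>f. f \<in> C \<Longrightarrow> \<exists>f'\<in>C. \<forall>t. (f has_real_derivative f' t) (at t)"
  assumes "f \<in> C"
  shows "smooth f"
proof -
  have D: "deriv f \<in> C \<and> (\<forall>t. f differentiable (at t))" if fC: "f \<in> C" for f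
  proof -
    obtain f' where f': "f' \<in> C" "\<forall>t. (f has_real_derivative f' t) (at t)"
      using assms(1)[OF fC] by blast
    have "deriv f = f'" using f'(2) by (auto intro!: ext DERIV_imp_deriv)
    moreover have "\<forall>t. f differentiable (at t)" using f'(2) real_differentiable_def by blast
    ultimately show ?thesis using f' by simp
  qed
  have "\<forall>f\<in>C. (deriv ^^ k) f \<in> C" for k
  proof (induction k)
    case (Suc k)
    show ?case
    proof
      fix f assume "f \<in> C"
      then have "deriv f \<in> C" using D by blast
      then show "(deriv ^^ Suc k) f \<in> C" using Suc by (simp add: funpow_Suc_right del: funpow.simps)
    qed
  qed simp
  then show ?thesis using D assms(2) unfolding smooth_def by blast
qed

lemma smooth_deriv_class:
  assumes "smooth f"
  shows "\<forall>t. (f has_real_derivative deriv f t) (at t)"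
  using assms unfolding smooth_def
  by (metis DERIV_deriv_iff_real_differentiable funpow_0)

lemma smooth_deriv:
  assumes "smooth f" shows "smooth (deriv f)"
  using assms unfolding smooth_def
  by (metis comp_apply funpow_Suc_right)

definition lcomb :: "(real \<times> real \<times> real \<times> (real \<Rightarrow> real)) list \<Rightarrow> real \<Rightarrow> real" where
  "lcomb L t = (\<Sum>(c,a,b,f)\<leftarrow>L. c * f (a * t + b))"

lemma lcomb_deriv:
  assumes "\<forall>(c,a,b,f)\<in>set L. smooth f"
  shows "(lcomb L has_real_derivative lcomb (map (\<lambda>(c,a,b,f). (c*a,a,b,deriv f)) L) t) (at t)"
  using assms
proof (induction L)
  case Nil
  then show ?case by (simp add: lcomb_def)
next
  case (Cons x L)
  obtain c a b f where x: "x = (c,a,b,f)" by (cases x) auto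
  have sf: "smooth f" using Cons.prems x by auto
  have d1: "((\<lambda>t. c * f (a * t + b)) has_real_derivative (c*a) * deriv f (a*t+b)) (at t)"
  proof -
    have "((\<lambda>t. f (a * t + b)) has_real_derivative deriv f (a*t+b) * a) (at t)"
      apply (rule DERIV_chain2[of f])
      using smooth_deriv_class[OF sf] apply blast
      by (auto intro!: derivative_eq_intros)
    from DERIV_cmult[OF this, of c] show ?thesis by (simp add: mult_ac)
  qed
  show ?case using DERIV_add[OF d1 Cons.IH] Cons.prems x
    by (simp add: lcomb_def)
qed

lemma smooth_lcomb:
  assumes "\<forall>(c,a,b,f)\<in>set L. smooth f"
  shows "smooth (lcomb L)"
proof (rule smooth_class[where C="{lcomb L | L. \<forall>(c,a,b,f)\<in>set L. smooth f}"])
  fix g assume "g \<in> {lcomb L | L. \<forall>(c,a,b,f)\<in>set L. smooth f}"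
  then obtain L where L: "g = lcomb L" "\<forall>(c,a,b,f)\<in>set L. smooth f" by blast
  let ?L = "map (\<lambda>(c,a,b,f). (c*a,a,b,deriv f)) L"
  have "\<forall>(c,a,b,f)\<in>set ?L. smooth f" using L(2) smooth_deriv by auto
  then show "\<exists>f'\<in>{lcomb L | L. \<forall>(c,a,b,f)\<in>set L. smooth f}. \<forall>t. (g has_real_derivative f' t) (at t)"
    using lcomb_deriv[OF L(2)] L(1) by blast
qed (use assms in blast)

lemma smooth_affine:
  assumes "smooth f" shows "smooth (\<lambda>t. c * f (a * t + b))"
proof -
  have "lcomb [(c,a,b,f)] = (\<lambda>t. c * f (a * t + b))" by (auto simp: lcomb_def)
  with smooth_lcomb[of "[(c,a,b,f)]"] assms show ?thesis by auto
qed

lemma smooth_lin2: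
  assumes "smooth f" "smooth g" shows "smooth (\<lambda>t. c * f (a * t + b) + c' * g (a' * t + b'))"
proof -
  have "lcomb [(c,a,b,f),(c',a',b',g)] = (\<lambda>t. c * f (a * t + b) + c' * g (a' * t + b'))"
    by (auto simp: lcomb_def)
  with smooth_lcomb[of "[(c,a,b,f),(c',a',b',g)]"] assms show ?thesis by auto
qed

definition pcomb :: "((real \<Rightarrow> real) \<times> (real \<Rightarrow> real)) list \<Rightarrow> real \<Rightarrow> real" where
  "pcomb L t = (\<Sum>(f,g)\<leftarrow>L. f t * g t)"

lemma pcomb_deriv:
  assumes "\<forall>(f,g)\<in>set L. smooth f \<and> smooth g"
  shows "(pcomb L has_real_derivative pcomb (concat (map (\<lambda>(f,g). [(deriv f, g), (f, deriv g)]) L)) t) (at t)"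
  using assms
proof (induction L)
  case Nil
  then show ?case by (simp add: pcomb_def)
next
  case (Cons x L)
  obtain f g where x: "x = (f,g)" by (cases x) auto
  have sf: "smooth f" "smooth g" using Cons.prems x by auto
  have d1: "((\<lambda>t. f t * g t) has_real_derivative deriv f t * g t + f t * deriv g t) (at t)"
    using DERIV_mult[OF smooth_deriv_class[OF sf(1), rule_format] smooth_deriv_class[OF sf(2), rule_format]]
    by (simp add: mult_ac)
  show ?case using DERIV_add[OF d1 Cons.IH] Cons.prems x
    by (simp add: pcomb_def add_ac)
qed

lemma smooth_pcomb:
  assumes "\<forall>(f,g)\<in>set L. smooth f \<and> smooth g"
  shows "smooth (pcomb L)"
proof (rule smooth_class[where C="{pcomb L | L. \<forall>(f,g)\<in>set L. smooth f \<and> smooth g}"])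
  fix h assume "h \<in> {pcomb L | L. \<forall>(f,g)\<in>set L. smooth f \<and> smooth g}"
  then obtain L where L: "h = pcomb L" "\<forall>(f,g)\<in>set L. smooth f \<and> smooth g" by blast
  let ?L = "concat (map (\<lambda>(f,g). [(deriv f, g), (f, deriv g)]) L)"
  have "\<forall>(f,g)\<in>set ?L. smooth f \<and> smooth g" using L(2) smooth_deriv by fastforce
  then show "\<exists>f'\<in>{pcomb L | L. \<forall>(f,g)\<in>set L. smooth f \<and> smooth g}. \<forall>t. (h has_real_derivative f' t) (at t)"
    using pcomb_deriv[OF L(2)] L(1) by blast
qed (use assms in blast)

lemma smooth_mult:
  assumes "smooth f" "smooth g" shows "smooth (\<lambda>t. f t * g t)"
proof -
  have "pcomb [(f,g)] = (\<lambda>t. f t * g t)" by (auto simp: pcomb_def)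
  with smooth_pcomb[of "[(f,g)]"] assms show ?thesis by auto
qed

lemma poly_div_exp_0: "((\<lambda>x. poly R x / exp x) \<longlongrightarrow> (0::real)) at_top"
proof -
  have "((\<lambda>x. \<Sum>i\<le>degree R. coeff R i * (x ^ i / exp x)) \<longlongrightarrow> (\<Sum>i\<le>degree R. coeff R i * 0)) at_top"
    by (intro tendsto_sum tendsto_mult tendsto_const tendsto_power_div_exp_0)
  then show ?thesis
    by (simp add: poly_altdef sum_divide_distrib)
qed

definition psiP :: "real poly \<Rightarrow> real \<Rightarrow> real" where
  "psiP P x = (if x > 0 then poly P (inverse x) * exp (- inverse x) else 0)"

definition dP :: "real poly \<Rightarrow> real poly" where
  "dP P = [:0,0,1:] * (P - pderiv P)"

lemma psiP_deriv_pos: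
  assumes x: "x > 0"
  shows "(psiP P has_real_derivative psiP (dP P) x) (at x)"
proof -
  have d: "((\<lambda>x. poly P (inverse x) * exp (- inverse x)) has_real_derivative
      poly (pderiv P) (inverse x) * (- (inverse x ^ 2)) * exp (- inverse x) +
      poly P (inverse x) * (exp (- inverse x) * (inverse x ^ 2))) (at x)"
    using x
    by (auto intro!: derivative_eq_intros DERIV_chain2[OF poly_DERIV]
        simp: power2_eq_square field_simps)
  have e: "poly (pderiv P) (inverse x) * (- (inverse x ^ 2)) * exp (- inverse x) +
      poly P (inverse x) * (exp (- inverse x) * (inverse x ^ 2)) = psiP (dP P) x"
    using x by (simp add: psiP_def dP_def algebra_simps power2_eq_square)
  show ?thesis
    apply (rule has_field_derivative_transform_within_open[where S="{0<..}"])
    using d e x by (auto simp: psiP_def)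
qed

lemma psiP_deriv_neg:
  assumes x: "x < 0"
  shows "(psiP P has_real_derivative psiP (dP P) x) (at x)"
proof -
  have "((\<lambda>_. 0) has_real_derivative psiP (dP P) x) (at x)" using x by (simp add: psiP_def)
  then show ?thesis
    apply (rule has_field_derivative_transform_within_open[where S="{..<0}"])
    using x by (auto simp: psiP_def)
qed

lemma psiP_deriv_0:
  "(psiP P has_real_derivative psiP (dP P) 0) (at 0)"
proof -
  have "((\<lambda>y. (psiP P y - psiP P 0) / (y - 0)) \<longlongrightarrow> 0) (at 0)"
    unfolding filterlim_at_split
  proof
    show "((\<lambda>y. (psiP P y - psiP P 0) / (y - 0)) \<longlongrightarrow> 0) (at_left 0)"
    proof (rule Lim_transform_eventually[of "\<lambda>_. 0"])
      show "\<forall>\<^sub>F y in at_left 0. 0 = (psiP P y - psiP P 0) / (y - 0)"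
        using eventually_at_left_real[where a=0 and b="-1", OF neg_less_0_iff_less[THEN iffD2, OF zero_less_one]] by eventually_elim (auto simp: psiP_def)
    qed simp
    show "((\<lambda>y. (psiP P y - psiP P 0) / (y - 0)) \<longlongrightarrow> 0) (at_right 0)"
      unfolding filterlim_at_right_to_top
    proof (rule Lim_transform_eventually[OF poly_div_exp_0[of "pCons 0 P"]])
      show "\<forall>\<^sub>F x in at_top. poly (pCons 0 P) x / exp x = (psiP P (inverse x) - psiP P 0) / (inverse x - 0)"
        using eventually_gt_at_top[of 0]
        by eventually_elim (auto simp: psiP_def exp_minus field_simps)
    qed
  qed
  then show ?thesis
    by (simp add: DERIV_def psiP_def)
qed

lemma psiP_deriv: "(psiP P has_real_derivative psiP (dP P) x) (at x)"
  using psiP_deriv_pos psiP_deriv_neg psiP_deriv_0 by (cases "x > 0"; cases "x < 0") auto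

lemma smooth_psiP: "smooth (psiP P)"
  by (rule smooth_class[where C="range psiP"]) (auto intro: psiP_deriv)

definition psi :: "real \<Rightarrow> real" where "psi = psiP 1"

lemma smooth_psi: "smooth psi" by (simp add: psi_def smooth_psiP)

lemma psi_pos: "x > 0 \<Longrightarrow> psi x > 0" and psi_zero: "x \<le> 0 \<Longrightarrow> psi x = 0"
  and psi_nonneg: "psi x \<ge> 0"
  by (auto simp: psi_def psiP_def)

lemma psi_cont: "continuous_on S psi"
  using psiP_deriv[of 1] unfolding psi_def
  by (meson DERIV_isCont continuous_at_imp_continuous_on)

lemma smooth_antideriv:
  assumes "\<forall>t. (f has_real_derivative g t) (at t)" "smooth g"
  shows "smooth f"
proof (rule smooth_class[where C="insert f {h. smooth h}"])
  fix h assume "h \<in> insert f {h. smooth h}"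
  then show "\<exists>f'\<in>insert f {h. smooth h}. \<forall>t. (h has_real_derivative f' t) (at t)"
    using assms smooth_deriv_class smooth_deriv by blast
qed simp

definition beta :: "real \<Rightarrow> real \<Rightarrow> real" where
  "beta e t = psi t * psi (e - t)"

lemma beta_zero: "s \<le> 0 \<or> s \<ge> e \<Longrightarrow> beta e s = 0"
  by (auto simp: beta_def psi_zero)

lemma beta_pos: "0 < s \<Longrightarrow> s < e \<Longrightarrow> beta e s > 0"
  by (auto simp: beta_def psi_pos)

lemma beta_nonneg: "beta e s \<ge> 0"
  by (auto simp: beta_def psi_nonneg)

lemma beta_cont: "continuous_on S (beta e)"
  unfolding beta_def by (auto intro!: continuous_intros continuous_on_compose2[OF psi_cont] psi_cont)

lemma smooth_beta: "smooth (beta e)"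
proof -
  have "smooth (\<lambda>t. 1 * psi ((-1) * t + e))" by (rule smooth_affine[OF smooth_psi])
  then have "smooth (\<lambda>t. psi (e - t))" by simp
  from smooth_mult[OF smooth_psi this] show ?thesis unfolding beta_def by (simp add: fun_eq_iff)
qed

definition Ib :: "real \<Rightarrow> real" where
  "Ib e = integral {0..e} (beta e)"

lemma Ib_pos: assumes "e > 0" shows "Ib e > 0"
proof -
  have "integral {0..e} (\<lambda>_. 0::real) < integral {0..e} (beta e)"
    by (rule integral_less_real) (use assms in \<open>auto intro: beta_cont beta_pos\<close>)
  then show ?thesis by (simp add: Ib_def)
qed

definition Bs :: "real \<Rightarrow> real \<Rightarrow> real" where
  "Bs e s = integral {-1..s} (beta e) / Ib e"

lemma beta_int: "beta e integrable_on {a..b}"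
  by (rule integrable_continuous_real[OF beta_cont])

lemma Bs_neg: assumes "s \<le> 0" shows "Bs e s = 0"
proof (cases "s < -1")
  case True then show ?thesis by (simp add: Bs_def)
next
  case False
  have "integral {-1..s} (beta e) = integral {-1..s} (\<lambda>_. 0::real)"
    by (rule Henstock_Kurzweil_Integration.integral_cong) (use assms in \<open>auto intro: beta_zero\<close>)
  then show ?thesis by (simp add: Bs_def)
qed

lemma int_m1_e: assumes "e > 0" shows "integral {-1..e} (beta e) = Ib e"
proof -
  have "integral {-1..0} (beta e) + integral {0..e} (beta e) = integral {-1..e} (beta e)"
    by (rule Henstock_Kurzweil_Integration.integral_combine) (use assms beta_int in auto)
  moreover have "integral {-1..0} (beta e) = 0"
    by (rule integral_unique, rule has_integral_is_0) (auto intro: beta_zero)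
  ultimately show ?thesis by (simp add: Ib_def)
qed

lemma Bs_big: assumes "e > 0" "s \<ge> e" shows "Bs e s = 1"
proof -
  have "integral {-1..e} (beta e) + integral {e..s} (beta e) = integral {-1..s} (beta e)"
    by (rule Henstock_Kurzweil_Integration.integral_combine) (use assms beta_int in auto)
  moreover have "integral {e..s} (beta e) = integral {e..s} (\<lambda>_. 0::real)"
    by (rule Henstock_Kurzweil_Integration.integral_cong) (auto intro: beta_zero)
  ultimately show ?thesis using int_m1_e[OF assms(1)] Ib_pos[OF assms(1)] by (simp add: Bs_def)
qed

lemma Bs_nonneg: assumes "e > 0" shows "Bs e s \<ge> 0"
  unfolding Bs_def using Ib_pos[OF assms]
  by (intro divide_nonneg_pos integral_nonneg beta_int) (auto intro: beta_nonneg)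

lemma Bs_le1: assumes "e > 0" shows "Bs e s \<le> 1"
proof (cases "s \<le> e")
  case True
  show ?thesis
  proof (cases "s < -1")
    case True then show ?thesis by (simp add: Bs_def)
  next
    case False
    have "integral {-1..s} (beta e) \<le> integral {-1..e} (beta e)"
      by (rule integral_subset_le) (use True False in \<open>auto intro: beta_int beta_nonneg\<close>)
    then show ?thesis using int_m1_e[OF assms] Ib_pos[OF assms] by (simp add: Bs_def)
  qed
qed (use Bs_big assms in auto)

lemma Bs_deriv: assumes "e > 0" shows "(Bs e has_real_derivative beta e s / Ib e) (at s)"
proof -
  consider "s < 0" | "-1 < s \<and> s < e + 1" | "s > e" by linarith
  then show ?thesis
  proof cases
    case 1
    have "((\<lambda>_. 0) has_real_derivative beta e s / Ib e) (at s)" using 1 by (simp add: beta_zero)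
    then show ?thesis
      by (rule has_field_derivative_transform_within_open[where S="{..<0}"]) (use 1 Bs_neg in auto)
  next
    case 2
    have "((\<lambda>x. integral {-1..x} (beta e)) has_real_derivative beta e s) (at s within {-1..e+1})"
      by (rule integral_has_real_derivative[OF beta_cont]) (use 2 in auto)
    then have "((\<lambda>x. integral {-1..x} (beta e)) has_real_derivative beta e s) (at s)"
      using 2 by (subst (asm) at_within_interior) (auto simp: interior_atLeastAtMost_real)
    then show ?thesis unfolding Bs_def[abs_def] using Ib_pos[OF assms] by (intro derivative_eq_intros) auto
  next
    case 3
    have "((\<lambda>_. 1) has_real_derivative beta e s / Ib e) (at s)" using 3 by (simp add: beta_zero)
    then show ?thesis
      by (rule has_field_derivative_transform_within_open[where S="{e<..}"]) (use 3 Bs_big assms in auto)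
  qed
qed

lemma smooth_Bs: assumes "e > 0" shows "smooth (Bs e)"
proof (rule smooth_antideriv)
  show "\<forall>t. (Bs e has_real_derivative beta e t / Ib e) (at t)" using Bs_deriv[OF assms] by blast
  have "smooth (\<lambda>t. (1 / Ib e) * beta e (1 * t + 0))" by (rule smooth_affine[OF smooth_beta])
  then show "smooth (\<lambda>t. beta e t / Ib e)" by simp
qed

definition phi :: "real \<Rightarrow> real \<Rightarrow> real \<Rightarrow> real \<Rightarrow> real" where
  "phi c d e t = Bs e (t - c) - Bs e (t - d)"

lemma smooth_phi: assumes "e > 0" shows "smooth (phi c d e)"
proof -
  have "smooth (\<lambda>t. 1 * Bs e (1 * t + (-c)) + (-1) * Bs e (1 * t + (-d)))"
    by (rule smooth_lin2[OF smooth_Bs[OF assms] smooth_Bs[OF assms]])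
  then show ?thesis unfolding phi_def by simp
qed

lemma phi_props:
  assumes "e > 0" "c + e \<le> d"
  shows "t \<le> c \<Longrightarrow> phi c d e t = 0"
    and "t \<ge> d + e \<Longrightarrow> phi c d e t = 0"
    and "c + e \<le> t \<Longrightarrow> t \<le> d \<Longrightarrow> phi c d e t = 1"
    and "0 \<le> phi c d e t" and "phi c d e t \<le> 1"
proof -
  show "t \<le> c \<Longrightarrow> phi c d e t = 0" using assms by (simp add: phi_def Bs_neg)
  show "t \<ge> d + e \<Longrightarrow> phi c d e t = 0" using assms by (simp add: phi_def Bs_big)
  show "c + e \<le> t \<Longrightarrow> t \<le> d \<Longrightarrow> phi c d e t = 1" using assms by (simp add: phi_def Bs_big Bs_neg)
  show "0 \<le> phi c d e t"
  proof (cases "t \<le> d")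
    case True then show ?thesis using assms Bs_nonneg[of e "t-c"] by (simp add: phi_def Bs_neg)
  next
    case False
    then have "t - c \<ge> e" using assms by simp
    then show ?thesis using assms Bs_le1[of e "t-d"] by (simp add: phi_def Bs_big)
  qed
  show "phi c d e t \<le> 1"
  proof (cases "t \<le> d")
    case True then show ?thesis using assms Bs_le1[of e "t-c"] by (simp add: phi_def Bs_neg)
  next
    case False
    then have "t - c \<ge> e" using assms by simp
    then show ?thesis using assms Bs_nonneg[of e "t-d"] by (simp add: phi_def Bs_big)
  qed
qed

lemma phi_test:
  assumes "e > 0" "c + e \<le> d" "0 < c" "d + e < 1"
  shows "test_fun_01 (phi c d e)"
  unfolding test_fun_01_def
proof
  show "\<forall>k t. (deriv ^^ k) (phi c d e) differentiable at t"
    using smooth_phi[OF assms(1)] unfolding smooth_def by blast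
  show "\<exists>a b. 0 < a \<and> b < 1 \<and> (\<forall>t. t \<notin> {a..b} \<longrightarrow> phi c d e t = 0)"
    using phi_props(1,2)[OF assms(1,2)] assms(3,4)
    by (intro exI[of _ c] exI[of _ "d+e"]) auto
qed

lemma AE_zero_from_Ioi:
  fixes W :: "real \<Rightarrow> real"
  assumes W: "integrable lborel W"
  assumes Z: "\<And>a. (\<integral>x. indicator {a<..} x * W x \<partial>lborel) = 0"
  shows "AE x in lborel. W x = 0"
proof -
  define P where "P x = max 0 (W x)" for x
  define N where "N x = max 0 (- W x)" for x
  have Wm[measurable]: "W \<in> borel_measurable lborel" using W by (rule borel_measurable_integrable)
  have Pm[measurable]: "P \<in> borel_measurable lborel" unfolding P_def by measurable
  have Nm[measurable]: "N \<in> borel_measurable lborel" unfolding N_def by measurable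
  have PI: "integrable lborel P" unfolding P_def using W by (intro integrable_max) auto
  have NI: "integrable lborel N" unfolding N_def using W by (intro integrable_max) auto
  have PIa: "integrable lborel (\<lambda>x. indicator {a<..} x * P x)" for a
    using integrable_real_mult_indicator[of "{a<..}" lborel P] PI by (simp add: mult.commute)
  have NIa: "integrable lborel (\<lambda>x. indicator {a<..} x * N x)" for a
    using integrable_real_mult_indicator[of "{a<..}" lborel N] NI by (simp add: mult.commute)
  have eqint: "(\<integral>x. indicator {a<..} x * P x \<partial>lborel) = (\<integral>x. indicator {a<..} x * N x \<partial>lborel)" for a
  proof -
    have "(\<integral>x. indicator {a<..} x * P x \<partial>lborel) - (\<integral>x. indicator {a<..} x * N x \<partial>lborel)
        = (\<integral>x. indicator {a<..} x * P x - indicator {a<..} x * N x \<partial>lborel)"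
      using PIa NIa by (rule Bochner_Integration.integral_diff[symmetric])
    also have "\<dots> = (\<integral>x. indicator {a<..} x * W x \<partial>lborel)"
      by (rule Bochner_Integration.integral_cong) (auto simp: P_def N_def max_def algebra_simps)
    finally show ?thesis using Z[of a] by simp
  qed
  define M1 where "M1 = density lborel (\<lambda>x. ennreal (P x))"
  define M2 where "M2 = density lborel (\<lambda>x. ennreal (N x))"
  have em1: "emeasure M1 {a<..} = ennreal (\<integral>x. indicator {a<..} x * P x \<partial>lborel)" for a
  proof -
    have "emeasure M1 {a<..} = (\<integral>\<^sup>+ x. ennreal (P x) * indicator {a<..} x \<partial>lborel)"
      unfolding M1_def by (rule emeasure_density) auto
    also have "\<dots> = (\<integral>\<^sup>+ x. ennreal (indicator {a<..} x * P x) \<partial>lborel)"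
      by (intro nn_integral_cong) (auto simp: indicator_def)
    also have "\<dots> = ennreal (\<integral>x. indicator {a<..} x * P x \<partial>lborel)"
      by (rule nn_integral_eq_integral[OF PIa]) (auto simp: P_def)
    finally show ?thesis .
  qed
  have em2: "emeasure M2 {a<..} = ennreal (\<integral>x. indicator {a<..} x * N x \<partial>lborel)" for a
  proof -
    have "emeasure M2 {a<..} = (\<integral>\<^sup>+ x. ennreal (N x) * indicator {a<..} x \<partial>lborel)"
      unfolding M2_def by (rule emeasure_density) auto
    also have "\<dots> = (\<integral>\<^sup>+ x. ennreal (indicator {a<..} x * N x) \<partial>lborel)"
      by (intro nn_integral_cong) (auto simp: indicator_def)
    also have "\<dots> = ennreal (\<integral>x. indicator {a<..} x * N x \<partial>lborel)"
      by (rule nn_integral_eq_integral[OF NIa]) (auto simp: N_def)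
    finally show ?thesis .
  qed
  have "M1 = M2"
    by (rule measure_eqI_lessThan) (auto simp: M1_def M2_def em1[unfolded M1_def] em2[unfolded M2_def] eqint)
  then have "AE x in lborel. ennreal (P x) = ennreal (N x)"
    unfolding M1_def M2_def by (intro sigma_finite_measure.density_unique[OF sigma_finite_lborel]) auto
  then show ?thesis
    by eventually_elim (auto simp: P_def N_def max_def split: if_splits)
qed

lemma phi_cont: assumes "e > 0" shows "continuous_on S (phi c d e)"
proof -
  have "isCont (Bs e) x" for x using Bs_deriv[OF assms] DERIV_isCont by blast
  then have cB: "continuous_on UNIV (Bs e)" by (simp add: continuous_at_imp_continuous_on)
  show ?thesis unfolding phi_def
    by (intro continuous_intros continuous_on_compose2[OF cB]) auto
qed

lemma phi_meas: assumes "e > 0" shows "phi c d e \<in> borel_measurable lborel"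
  using borel_measurable_continuous_onI[OF phi_cont[OF assms]] by simp

lemma weak_interval_zero:
  assumes g1: "is_weak_deriv_01 v g1" and g2: "is_weak_deriv_01 v g2"
  assumes a: "0 \<le> a" "a < 1"
  shows "(\<integral>x. indicator {a<..<1} x * (g1 x - g2 x) \<partial>lborel) = 0"
proof -
  define w where "w x = indicator {0<..<1} x * (g1 x - g2 x)" for x
  have i1: "integrable lborel (\<lambda>x. indicator {0<..<1} x * g1 x)"
    using g1 unfolding is_weak_deriv_01_def set_integrable_def by simp
  have i2: "integrable lborel (\<lambda>x. indicator {0<..<1} x * g2 x)"
    using g2 unfolding is_weak_deriv_01_def set_integrable_def by simp
  have wi: "integrable lborel w"
    unfolding w_def using Bochner_Integration.integrable_diff[OF i1 i2] by (simp add: algebra_simps)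
  define e where "e k = (1 - a) * inverse (real (Suc k)) / 4" for k
  have epos: "e k > 0" for k using a by (simp add: e_def)
  have ele: "e k \<le> (1 - a) / 4" for k
    using a mult_left_le_one_le[of "real k" a] by (auto simp: e_def field_simps)
  have elim: "e \<longlonglongrightarrow> 0"
    using tendsto_divide[OF tendsto_mult[OF tendsto_const[of "1-a"] LIMSEQ_inverse_real_of_nat] tendsto_const[of 4]]
    unfolding e_def by simp
  define ph where "ph k = phi (a + e k) (1 - 2 * e k) (e k)" for k
  have cond: "a + e k + e k \<le> 1 - 2 * e k" for k using ele[of k] a by simp
  have test: "test_fun_01 (ph k)" for k
    unfolding ph_def by (rule phi_test) (use epos[of k] cond[of k] a in auto)
  have phb: "0 \<le> ph k x" "ph k x \<le> 1" for k x
    unfolding ph_def using phi_props(4,5)[OF epos cond] by auto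
  have phm[measurable]: "ph k \<in> borel_measurable lborel" for k
    unfolding ph_def by (rule phi_meas[OF epos])
  have g1m[measurable]: "(\<lambda>x. indicator {0<..<1} x * g1 x) \<in> borel_measurable lborel"
    using i1 by (rule borel_measurable_integrable)
  have g2m[measurable]: "(\<lambda>x. indicator {0<..<1} x * g2 x) \<in> borel_measurable lborel"
    using i2 by (rule borel_measurable_integrable)
  have int1: "integrable lborel (\<lambda>x. indicator {0<..<1} x * g1 x * ph k x)" for k
    by (rule Bochner_Integration.integrable_bound[OF i1]) (auto intro!: AE_I2 mult_right_le_one_le simp: abs_mult phb)
  have int2: "integrable lborel (\<lambda>x. indicator {0<..<1} x * g2 x * ph k x)" for k
    by (rule Bochner_Integration.integrable_bound[OF i2]) (auto intro!: AE_I2 mult_right_le_one_le simp: abs_mult phb)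
  have zero: "(\<integral>x. w x * ph k x \<partial>lborel) = 0" for k
  proof -
    have "(\<integral>x. indicator {0<..<1} x * g1 x * ph k x \<partial>lborel) = (\<integral>x. indicator {0<..<1} x * g2 x * ph k x \<partial>lborel)"
      using g1 g2 test[of k] unfolding is_weak_deriv_01_def set_lebesgue_integral_def
      by (auto simp: mult_ac)
    then have "(\<integral>x. indicator {0<..<1} x * g1 x * ph k x - indicator {0<..<1} x * g2 x * ph k x \<partial>lborel) = 0"
      by (subst Bochner_Integration.integral_diff[OF int1 int2]) simp
    then show ?thesis unfolding w_def by (simp add: algebra_simps)
  qed
  have lim: "(\<lambda>k. w x * ph k x) \<longlonglongrightarrow> indicator {a<..<1} x * (g1 x - g2 x)" for x
  proof (cases "a < x \<and> x < 1")
    case True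
    define \<delta> where "\<delta> = min (x - a) (1 - x) / 2"
    have "\<delta> > 0" using True by (simp add: \<delta>_def)
    then have "eventually (\<lambda>k. e k < \<delta>) sequentially"
      using elim by (rule order_tendstoD(2)[rotated])
    then have "eventually (\<lambda>k. w x * ph k x = indicator {a<..<1} x * (g1 x - g2 x)) sequentially"
    proof eventually_elim
      case (elim k)
      have "ph k x = 1" unfolding ph_def
        by (rule phi_props(3)[OF epos cond]) (use elim True \<delta>_def in auto)
      then show ?case using True a by (simp add: w_def)
    qed
    then show ?thesis by (rule tendsto_eventually)
  next
    case False
    have "ph k x = 0" for k
    proof (cases "x \<le> a")
      case True
      then show ?thesis unfolding ph_def by (intro phi_props(1)[OF epos cond]) (use epos[of k] in auto)
    next
      case False
      with \<open>\<not> (a < x \<and> x < 1)\<close> have "x \<ge> 1" by auto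
      then show ?thesis unfolding ph_def by (intro phi_props(2)[OF epos cond]) (use epos[of k] in auto)
    qed
    then show ?thesis using False by simp
  qed
  have "(\<lambda>k. \<integral>x. w x * ph k x \<partial>lborel) \<longlonglongrightarrow> (\<integral>x. indicator {a<..<1} x * (g1 x - g2 x) \<partial>lborel)"
  proof (rule integral_dominated_convergence[where w="\<lambda>x. norm (w x)"])
    show "(\<lambda>x. indicator {a<..<1} x * (g1 x - g2 x)) \<in> borel_measurable lborel"
    proof -
      have "(\<lambda>x. indicator {a<..<1} x * w x) \<in> borel_measurable lborel"
        using borel_measurable_integrable[OF wi] by measurable
      moreover have "(\<lambda>x. indicator {a<..<1} x * w x) = (\<lambda>x. indicator {a<..<1} x * (g1 x - g2 x))"
        using a by (auto simp: w_def indicator_def fun_eq_iff)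
      ultimately show ?thesis by simp
    qed
    show "(\<lambda>x. w x * ph k x) \<in> borel_measurable lborel" for k
      using borel_measurable_integrable[OF wi] by measurable
    show "integrable lborel (\<lambda>x. norm (w x))" using wi by simp
    show "AE x in lborel. (\<lambda>k. w x * ph k x) \<longlonglongrightarrow> indicator {a<..<1} x * (g1 x - g2 x)"
      using lim by simp
    show "AE x in lborel. norm (w x * ph k x) \<le> norm (w x)" for k
      by (auto intro!: AE_I2 mult_right_le_one_le simp: abs_mult phb)
  qed
  then show ?thesis using zero by (simp add: LIMSEQ_const_iff)
qed

lemma weak_unique:
  assumes g1: "is_weak_deriv_01 v g1" and g2: "is_weak_deriv_01 v g2"
  shows "AE x in lborel. x \<in> {0<..<1} \<longrightarrow> g1 x = g2 x"
proof -
  define W where "W x = indicator {0<..<1} x * (g1 x - g2 x)" for x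
  have i1: "integrable lborel (\<lambda>x. indicator {0<..<1} x * g1 x)"
    using g1 unfolding is_weak_deriv_01_def set_integrable_def by simp
  have i2: "integrable lborel (\<lambda>x. indicator {0<..<1} x * g2 x)"
    using g2 unfolding is_weak_deriv_01_def set_integrable_def by simp
  have wi: "integrable lborel W"
    unfolding W_def using Bochner_Integration.integrable_diff[OF i1 i2] by (simp add: algebra_simps)
  have "AE x in lborel. W x = 0"
  proof (rule AE_zero_from_Ioi[OF wi])
    fix b :: real
    show "(\<integral>x. indicator {b<..} x * W x \<partial>lborel) = 0"
    proof (cases "b < 1")
      case True
      define a where "a = max b 0"
      have "(\<lambda>x. indicator {b<..} x * W x) = (\<lambda>x. indicator {a<..<1} x * (g1 x - g2 x))"
        by (auto simp: W_def a_def indicator_def fun_eq_iff)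
      then show ?thesis using weak_interval_zero[OF g1 g2, of a] True by (simp add: a_def)
    next
      case False
      then have "(\<lambda>x. indicator {b<..} x * W x) = (\<lambda>x. 0)"
        by (auto simp: W_def indicator_def fun_eq_iff)
      then show ?thesis by simp
    qed
  qed
  then show ?thesis by eventually_elim (auto simp: W_def)
qed

lemma deriv_sign_le:
  fixes f f' :: "real \<Rightarrow> real"
  assumes "a \<le> b" "\<And>z. z \<in> {a..b} \<Longrightarrow> (f has_real_derivative f' z) (at z within {a..b})"
    "\<And>z. z \<in> {a..b} \<Longrightarrow> f' z \<le> 0"
  shows "f b \<le> f a"
proof -
  obtain z where z: "z \<in> {a..b}" "f b - f a = f' z * (b - a)"
    using mvt_very_simple[of a b f "\<lambda>z. (*) (f' z)"] assms(1,2)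
    by (auto simp: has_field_derivative_def)
  then show ?thesis using assms(1) assms(3)[OF z(1)] mult_nonpos_nonneg[of "f' z" "b-a"] by simp
qed

locale setting =
  fixes u u' u'' :: "real \<Rightarrow> real"
  assumes u': "\<forall>t\<in>{0..1}. (u has_real_derivative u' t) (at t within {0..1})"
    and u'': "\<forall>t\<in>{0..1}. (u' has_real_derivative u'' t) (at t within {0..1})"
    and u''_cont: "continuous_on {0..1} u''"
begin

definition K where "K = (SUP t\<in>{0..1}. \<bar>u'' t\<bar>)"

lemma K_bound: "t \<in> {0..1} \<Longrightarrow> \<bar>u'' t\<bar> \<le> K"
proof -
  assume t: "t \<in> {0..1}"
  have "compact ((\<lambda>t. \<bar>u'' t\<bar>) ` {0..1})"
    by (intro compact_continuous_image continuous_intros u''_cont) auto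
  then have "bdd_above ((\<lambda>t. \<bar>u'' t\<bar>) ` {0..1})"
    by (intro bounded_imp_bdd_above compact_imp_bounded)
  then show ?thesis unfolding K_def by (rule cSUP_upper[OF t])
qed

lemma K_nonneg: "K \<ge> 0"
  using K_bound[of 0] by simp

lemma u'_within: "a \<in> {0..1} \<Longrightarrow> b \<in> {0..1} \<Longrightarrow> z \<in> {a..b} \<Longrightarrow> (u' has_real_derivative u'' z) (at z within {a..b})"
  by (rule DERIV_subset[of _ _ _ "{0..1}"]) (use u'' in auto)

lemma u_within: "a \<in> {0..1} \<Longrightarrow> b \<in> {0..1} \<Longrightarrow> z \<in> {a..b} \<Longrightarrow> (u has_real_derivative u' z) (at z within {a..b})"
  by (rule DERIV_subset[of _ _ _ "{0..1}"]) (use u' in auto)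

lemma u'_lip:
  assumes "z \<in> {0..1}" "t \<in> {0..1}"
  shows "\<bar>u' z - u' t\<bar> \<le> K * \<bar>z - t\<bar>"
proof -
  have *: "\<bar>u' b - u' a\<bar> \<le> K * (b - a)" if "a \<le> b" "a \<in> {0..1}" "b \<in> {0..1}" for a b
  proof -
    have "\<exists>\<xi>\<in>{a..b}. u' b - u' a = u'' \<xi> * (b - a)"
    proof (rule mvt_very_simple[of a b u' "\<lambda>z. (*) (u'' z)"])
      fix z assume "a \<le> z" "z \<le> b"
      then show "(u' has_derivative (*) (u'' z)) (at z within {a..b})"
        using u'_within[of a b z] that by (simp add: has_field_derivative_def)
    qed (use that in auto)
    then obtain \<xi> where \<xi>: "\<xi> \<in> {a..b}" "u' b - u' a = u'' \<xi> * (b - a)" by blast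
    have "\<xi> \<in> {0..1}" using \<xi>(1) that by auto
    then have "\<bar>u'' \<xi>\<bar> \<le> K" by (rule K_bound)
    then show ?thesis using \<xi>(2) that(1) by (simp add: abs_mult mult_right_mono)
  qed
  show ?thesis
  proof (cases "t \<le> z")
    case True then show ?thesis using *[of t z] assms by simp
  next
    case False then show ?thesis using *[of z t] assms by (simp add: abs_minus_commute)
  qed
qed

lemma taylor:
  assumes t: "t \<in> {0..1}" and y: "y \<in> {0..1}"
  shows "\<bar>u y - u t - u' t * (y - t)\<bar> \<le> K / 2 * (y - t)^2"
proof -
  define R where "R z = u z - u t - u' t * (z - t)" for z
  have dR: "((\<lambda>z. R z + s * (K/2) * (z - t)^2) has_real_derivative (u' z - u' t + s * K * (z - t))) (at z within {a..b})"
    if "a \<in> {0..1}" "b \<in> {0..1}" "z \<in> {a..b}" for a b z s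
    unfolding R_def using u_within[OF that]
    by (auto intro!: derivative_eq_intros simp: field_simps)
  have Rt: "R t = 0" by (simp add: R_def)
  have lip: "\<bar>u' z - u' t\<bar> \<le> K * \<bar>z - t\<bar>" if "z \<in> {0..1}" for z
    using u'_lip[OF that t] .
  show ?thesis
  proof (cases "t \<le> y")
    case True
    have up: "R y + (-1) * (K/2) * (y - t)^2 \<le> R t + (-1) * (K/2) * (t - t)^2"
    proof (rule deriv_sign_le[OF True])
      fix z assume z: "z \<in> {t..y}"
      show "((\<lambda>z. R z + (-1) * (K/2) * (z - t)^2) has_real_derivative (u' z - u' t + (-1) * K * (z - t))) (at z within {t..y})"
        by (rule dR) (use t y z in auto)
      have "z \<in> {0..1}" using z t y by auto
      from lip[OF this] z show "u' z - u' t + (-1) * K * (z - t) \<le> 0" by (simp add: abs_le_iff algebra_simps)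
    qed
    have lo: "- (R y + 1 * (K/2) * (y - t)^2) \<le> - (R t + 1 * (K/2) * (t - t)^2)"
    proof (rule deriv_sign_le[OF True])
      fix z assume z: "z \<in> {t..y}"
      show "((\<lambda>z. - (R z + 1 * (K/2) * (z - t)^2)) has_real_derivative - (u' z - u' t + 1 * K * (z - t))) (at z within {t..y})"
        by (rule DERIV_minus, rule dR) (use t y z in auto)
      have "z \<in> {0..1}" using z t y by auto
      from lip[OF this] z show "- (u' z - u' t + 1 * K * (z - t)) \<le> 0" by (simp add: abs_le_iff algebra_simps)
    qed
    show ?thesis using up lo Rt unfolding R_def by (intro abs_leI) (simp_all add: field_simps)
  next
    case False
    then have yt: "y \<le> t" by simp
    have lo: "R t + 1 * (K/2) * (t - t)^2 \<le> R y + 1 * (K/2) * (y - t)^2"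
    proof (rule deriv_sign_le[OF yt])
      fix z assume z: "z \<in> {y..t}"
      show "((\<lambda>z. R z + 1 * (K/2) * (z - t)^2) has_real_derivative (u' z - u' t + 1 * K * (z - t))) (at z within {y..t})"
        by (rule dR) (use t y z in auto)
      have "z \<in> {0..1}" using z t y by auto
      from lip[OF this] z show "u' z - u' t + 1 * K * (z - t) \<le> 0" by (simp add: abs_le_iff algebra_simps)
    qed
    have up: "- (R t + (-1) * (K/2) * (t - t)^2) \<le> - (R y + (-1) * (K/2) * (y - t)^2)"
    proof (rule deriv_sign_le[OF yt])
      fix z assume z: "z \<in> {y..t}"
      show "((\<lambda>z. - (R z + (-1) * (K/2) * (z - t)^2)) has_real_derivative - (u' z - u' t + (-1) * K * (z - t))) (at z within {y..t})"
        by (rule DERIV_minus, rule dR) (use t y z in auto)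
      have "z \<in> {0..1}" using z t y by auto
      from lip[OF this] z show "- (u' z - u' t + (-1) * K * (z - t)) \<le> 0" by (simp add: abs_le_iff algebra_simps)
    qed
    show ?thesis using up lo Rt unfolding R_def by (intro abs_leI) (simp_all add: field_simps)
  qed
qed

end

context setting
begin

lemma interp_err:
  assumes ab: "a \<in> {0..1}" "b \<in> {0..1}" "a < b" and t: "t \<in> {a..b}"
  defines "s \<equiv> (u b - u a) / (b - a)"
  shows "\<bar>u' t - s\<bar> \<le> K * ((b - t)^2 + (t - a)^2) / (2 * (b - a))"
    and "\<bar>u t - (u a + s * (t - a))\<bar> \<le> K * (t - a) * (b - t) / 2"
proof -
  have t01: "t \<in> {0..1}" using ab t by auto
  define R1 where "R1 = u b - u t - u' t * (b - t)"
  define R2 where "R2 = u a - u t - u' t * (a - t)"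
  have B1: "\<bar>R1\<bar> \<le> K / 2 * (b - t)^2" unfolding R1_def using taylor[OF t01 ab(2)] .
  have B2: "\<bar>R2\<bar> \<le> K / 2 * (t - a)^2" unfolding R2_def using taylor[OF t01 ab(1)]
    by (simp add: power2_commute)
  have h: "b - a > 0" using ab by simp
  have id1: "u' t - s = (R2 - R1) / (b - a)"
    using h unfolding s_def R1_def R2_def by (simp add: field_simps)
  have "\<bar>R2 - R1\<bar> \<le> K / 2 * (t - a)^2 + K / 2 * (b - t)^2"
    using B1 B2 abs_triangle_ineq4[of R2 R1] by linarith
  then have "\<bar>R2 - R1\<bar> / (b - a) \<le> (K / 2 * (t - a)^2 + K / 2 * (b - t)^2) / (b - a)"
    by (rule divide_right_mono) (use h in auto)
  moreover have "(K / 2 * (t - a)^2 + K / 2 * (b - t)^2) / (b - a) = K * ((b - t)^2 + (t - a)^2) / (2 * (b - a))"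
    by (simp add: field_simps)
  ultimately show "\<bar>u' t - s\<bar> \<le> K * ((b - t)^2 + (t - a)^2) / (2 * (b - a))"
    unfolding id1 using h by (simp add: abs_divide)
  have id2: "u t - (u a + s * (t - a)) = - ((R2 * (b - t) + R1 * (t - a)) / (b - a))"
    using h unfolding s_def R1_def R2_def by (simp add: field_simps)
  have bt: "b - t \<ge> 0" "t - a \<ge> 0" using t by auto
  have "\<bar>R2 * (b - t)\<bar> \<le> K / 2 * (t - a)^2 * (b - t)"
    using mult_right_mono[OF B2 bt(1)] bt by (simp add: abs_mult)
  moreover have "\<bar>R1 * (t - a)\<bar> \<le> K / 2 * (b - t)^2 * (t - a)"
    using mult_right_mono[OF B1 bt(2)] bt by (simp add: abs_mult)
  ultimately have "\<bar>R2 * (b - t) + R1 * (t - a)\<bar> \<le> K / 2 * (t - a)^2 * (b - t) + K / 2 * (b - t)^2 * (t - a)"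
    using abs_triangle_ineq[of "R2 * (b - t)" "R1 * (t - a)"] by linarith
  also have "\<dots> = K * (t - a) * (b - t) / 2 * (b - a)"
    by (simp add: power2_eq_square field_simps)
  finally have L: "\<bar>R2 * (b - t) + R1 * (t - a)\<bar> \<le> K * (t - a) * (b - t) / 2 * (b - a)" .
  have "\<bar>R2 * (b - t) + R1 * (t - a)\<bar> / (b - a) \<le> K * (t - a) * (b - t) / 2"
    using L h by (simp add: divide_le_eq)
  moreover have "\<bar>u t - (u a + s * (t - a))\<bar> = \<bar>R2 * (b - t) + R1 * (t - a)\<bar> / (b - a)"
    unfolding id2 abs_minus_cancel abs_divide using h by simp
  ultimately show "\<bar>u t - (u a + s * (t - a))\<bar> \<le> K * (t - a) * (b - t) / 2" by simp
qed

lemma interp_err':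
  assumes ab: "a \<in> {0..1}" "b \<in> {0..1}" "a < b" and t: "t \<in> {a..b}"
  defines "s \<equiv> (u b - u a) / (b - a)"
  shows "\<bar>u' t - s\<bar> \<le> K * ((b - a) / 4 + \<bar>t - (a + b) / 2\<bar> / 2)"
    and "\<bar>u t - (u a + s * (t - a))\<bar> \<le> K * (b - a)^2 / 8"
proof -
  have h: "b - a > 0" using ab by simp
  have E: "((b - t)^2 + (t - a)^2) / (2 * (b - a)) = (b - a) / 4 + (t - (a + b) / 2)^2 / (b - a)"
    using h by (simp add: field_simps power2_eq_square)
  have X: "(t - (a + b) / 2)^2 / (b - a) \<le> \<bar>t - (a + b) / 2\<bar> / 2"
  proof -
    have ta: "a \<le> t" "t \<le> b" using t by auto
    have "t - (a + b) / 2 \<le> (b - a) / 2" using ta by argo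
    moreover have "- (t - (a + b) / 2) \<le> (b - a) / 2" using ta by argo
    ultimately have "\<bar>t - (a + b) / 2\<bar> \<le> (b - a) / 2" by (rule abs_leI)
    then have "\<bar>t - (a + b) / 2\<bar> * \<bar>t - (a + b) / 2\<bar> \<le> \<bar>t - (a + b) / 2\<bar> * ((b - a) / 2)"
      by (intro mult_left_mono) auto
    then show ?thesis using h by (simp add: field_simps power2_eq_square)
  qed
  have *: "((b - t)^2 + (t - a)^2) / (2 * (b - a)) \<le> (b - a) / 4 + \<bar>t - (a + b) / 2\<bar> / 2"
    using E X by argo
  have "K * ((b - t)^2 + (t - a)^2) / (2 * (b - a)) \<le> K * ((b - a) / 4 + \<bar>t - (a + b) / 2\<bar> / 2)"
    using mult_left_mono[OF * K_nonneg] by simp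
  then show "\<bar>u' t - s\<bar> \<le> K * ((b - a) / 4 + \<bar>t - (a + b) / 2\<bar> / 2)"
    using interp_err(1)[OF assms(1-4)] unfolding s_def by linarith
  have "(t - a) * (b - t) \<le> (b - a)^2 / 4"
  proof -
    have "(b - a)^2 - 4 * ((t - a) * (b - t)) = ((t - a) - (b - t))^2"
      by (simp add: power2_eq_square algebra_simps)
    moreover have "((t - a) - (b - t))^2 \<ge> 0" by simp
    ultimately show ?thesis by argo
  qed
  then have "K * ((t - a) * (b - t)) \<le> K * ((b - a)^2 / 4)"
    by (rule mult_left_mono[OF _ K_nonneg])
  then have "K * (t - a) * (b - t) / 2 \<le> K * (b - a)^2 / 8"
    by (simp add: field_simps)
  then show "\<bar>u t - (u a + s * (t - a))\<bar> \<le> K * (b - a)^2 / 8"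
    using interp_err(2)[OF assms(1-4)] unfolding s_def by linarith
qed

end

locale setting2 = setting +
  fixes x :: "nat \<Rightarrow> real" and N :: nat and uI :: "real \<Rightarrow> real"
  assumes x0: "x 0 = 0" and xN: "x (N + 1) = 1"
    and xmono: "\<forall>i\<le>N. x i < x (Suc i)"
    and uI_cont: "continuous_on {0..1} uI"
    and uI_affine: "\<forall>i\<le>N. \<exists>a b. \<forall>t\<in>{x i..x (Suc i)}. uI t = a * t + b"
    and uI_nodes: "\<forall>i\<le>N + 1. uI (x i) = u (x i)"
begin

lemma xlt: "i < j \<Longrightarrow> j \<le> N + 1 \<Longrightarrow> x i < x j"
proof (induction j)
  case 0 then show ?case by simp
next
  case (Suc j)
  have "x j < x (Suc j)" using xmono Suc.prems by auto
  then show ?case using Suc by (cases "i = j") auto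
qed

lemma xle: "i \<le> j \<Longrightarrow> j \<le> N + 1 \<Longrightarrow> x i \<le> x j"
  using xlt by (cases "i = j") (auto intro: less_imp_le)

lemma x01: "i \<le> N + 1 \<Longrightarrow> x i \<in> {0..1}"
  using xle[of 0 i] xle[of i "N+1"] x0 xN by auto

definition sl :: "nat \<Rightarrow> real" where
  "sl i = (u (x (Suc i)) - u (x i)) / (x (Suc i) - x i)"

lemma uI_on:
  assumes i: "i \<le> N" and t: "t \<in> {x i..x (Suc i)}"
  shows "uI t = u (x i) + sl i * (t - x i)"
proof -
  obtain a b where ab: "\<forall>t\<in>{x i..x (Suc i)}. uI t = a * t + b" using uI_affine i by blast
  have lt: "x i < x (Suc i)" using xmono i by auto
  have "x i \<in> {x i..x (Suc i)}" "x (Suc i) \<in> {x i..x (Suc i)}" using lt by auto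
  then have n1: "a * x i + b = u (x i)" and n2: "a * x (Suc i) + b = u (x (Suc i))"
    using ab uI_nodes i by (metis le_SucI Suc_eq_plus1 Suc_le_mono)+
  have "a = sl i" unfolding sl_def using lt n1 n2 by (simp add: field_simps)
  then show ?thesis using ab t n1 by (auto simp: algebra_simps)
qed

lemma locate:
  assumes "0 \<le> t" "t < 1"
  shows "\<exists>i\<le>N. x i \<le> t \<and> t < x (Suc i)"
proof -
  define S where "S = {j. j \<le> N + 1 \<and> x j \<le> t}"
  have fin: "finite S" unfolding S_def by simp
  have ne: "0 \<in> S" unfolding S_def using assms x0 by simp
  define i where "i = Max S"
  have iS: "i \<in> S" unfolding i_def using fin ne by (intro Max_in) auto
  have iN: "i \<le> N"
  proof (rule ccontr)
    assume "\<not> i \<le> N"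
    then have "i = N + 1" using iS unfolding S_def by auto
    then show False using iS assms xN unfolding S_def by auto
  qed
  have "Suc i \<notin> S" using Max_ge[OF fin, of "Suc i"] unfolding i_def[symmetric] by auto
  then have "t < x (Suc i)" using iN unfolding S_def by auto
  then show ?thesis using iN iS unfolding S_def by auto
qed

definition ell :: "real \<Rightarrow> real" where
  "ell t = (\<Sum>i\<le>N. sl i * indicator {x i..<x (Suc i)} t)"

lemma ell_on:
  assumes i: "i \<le> N" and t: "t \<in> {x i..<x (Suc i)}"
  shows "ell t = sl i"
proof -
  have "indicator {x j..<x (Suc j)} t = (if j = i then 1 else (0::real))" if j: "j \<le> N" for j
  proof (cases "j = i")
    case True then show ?thesis using t by simp
  next
    case False
    show ?thesis
    proof (cases "j < i")
      case True
      then have "x (Suc j) \<le> x i" using xle[of "Suc j" i] i by auto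
      then show ?thesis using t False by auto
    next
      case False
      then have "Suc i \<le> j" using \<open>j \<noteq> i\<close> by auto
      then have "x (Suc i) \<le> x j" using xle[of "Suc i" j] j by auto
      then show ?thesis using t \<open>j \<noteq> i\<close> by auto
    qed
  qed
  then have "ell t = (\<Sum>j\<le>N. sl j * (if j = i then 1 else 0))"
    unfolding ell_def by (intro sum.cong) auto
  also have "\<dots> = sl i" using i by (simp add: if_distrib sum.delta cong: if_cong)
  finally show ?thesis .
qed

definition g0 :: "real \<Rightarrow> real" where "g0 t = u' t - ell t"
definition e :: "real \<Rightarrow> real" where "e t = u t - uI t"

definition hh :: real where "hh = Max ((\<lambda>i. x (Suc i) - x i) ` {0..N})"

lemma hi_le: "i \<le> N \<Longrightarrow> x (Suc i) - x i \<le> hh"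
  unfolding hh_def by (rule Max_ge) auto

lemma hh_pos: "hh > 0"
  using hi_le[of 0] xmono by fastforce

lemma hh_le1: "hh \<le> 1"
proof -
  have "hh \<in> (\<lambda>i. x (Suc i) - x i) ` {0..N}" unfolding hh_def by (intro Max_in) auto
  then obtain i where i: "i \<le> N" "hh = x (Suc i) - x i" by auto
  then show ?thesis using x01[of i] x01[of "Suc i"] by auto
qed

lemma e_bound:
  assumes t: "t \<in> {0..1}"
  shows "\<bar>e t\<bar> \<le> K * hh^2 / 8"
proof (cases "t = 1")
  case True
  have "uI (x (N+1)) = u (x (N+1))" using uI_nodes by simp
  then have "e t = 0" using xN True unfolding e_def by simp
  then show ?thesis using K_nonneg by simp
next
  case False
  then obtain i where i: "i \<le> N" "x i \<le> t" "t < x (Suc i)" using locate[of t] t by auto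
  have a: "x i \<in> {0..1}" "x (Suc i) \<in> {0..1}" "x i < x (Suc i)" using x01[of i] x01[of "Suc i"] i xmono by auto
  have "\<bar>u t - (u (x i) + sl i * (t - x i))\<bar> \<le> K * (x (Suc i) - x i)^2 / 8"
    unfolding sl_def by (rule interp_err'(2)[OF a]) (use i in auto)
  moreover have "uI t = u (x i) + sl i * (t - x i)" using uI_on[of i t] i by auto
  moreover have "K * (x (Suc i) - x i)^2 / 8 \<le> K * hh^2 / 8"
    using hi_le[OF i(1)] a(3) K_nonneg by (intro divide_right_mono mult_left_mono power_mono) auto
  ultimately show ?thesis unfolding e_def by simp
qed

lemma g0_bound:
  assumes i: "i \<le> N" and t: "t \<in> {x i..<x (Suc i)}"
  shows "\<bar>g0 t\<bar> \<le> K * ((x (Suc i) - x i) / 4 + \<bar>t - (x i + x (Suc i)) / 2\<bar> / 2)"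
proof -
  have a: "x i \<in> {0..1}" "x (Suc i) \<in> {0..1}" "x i < x (Suc i)" using x01[of i] x01[of "Suc i"] i xmono by auto
  show ?thesis unfolding g0_def ell_on[OF i t] sl_def
    by (rule interp_err'(1)[OF a]) (use t in auto)
qed

end

lemma set_int_cont: "continuous_on {a..b} f \<Longrightarrow> set_integrable lborel {a..b} (f :: real \<Rightarrow> real)"
  unfolding set_integrable_def by (rule borel_integrable_compact) auto

lemma set_int_cont01: "continuous_on {0..1} f \<Longrightarrow> set_integrable lborel {0<..<1} (f :: real \<Rightarrow> real)"
  by (rule set_integrable_subset[OF set_int_cont]) auto

lemma set_int_mult_cont:
  fixes f \<phi> :: "real \<Rightarrow> real"
  assumes f: "set_integrable lborel {0<..<1} f" and \<phi>: "continuous_on UNIV \<phi>"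
  shows "set_integrable lborel {0<..<1} (\<lambda>t. f t * \<phi> t)"
proof -
  have "compact (\<phi> ` {0..1})" by (rule compact_continuous_image) (use \<phi> continuous_on_subset in auto)
  then obtain B where B: "\<forall>y\<in>\<phi> ` {0..1}. norm y \<le> B" using compact_imp_bounded bounded_iff by blast
  have fi: "integrable lborel (\<lambda>t. indicator {0<..<1} t * f t)" using f unfolding set_integrable_def by simp
  have \<phi>m: "\<phi> \<in> borel_measurable lborel" using borel_measurable_continuous_onI[OF \<phi>] by simp
  have "integrable lborel (\<lambda>t. indicator {0<..<1} t * (f t * \<phi> t))"
  proof (rule Bochner_Integration.integrable_bound)
    show "integrable lborel (\<lambda>t. B * (indicator {0<..<1} t * f t))" using fi by simp
    show "(\<lambda>t. indicator {0<..<1} t * (f t * \<phi> t)) \<in> borel_measurable lborel"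
      using borel_measurable_integrable[OF fi] \<phi>m by (simp add: mult.assoc[symmetric])
    show "AE t in lborel. norm (indicator {0<..<1} t * (f t * \<phi> t)) \<le> norm (B * (indicator {0<..<1} t * f t))"
    proof (rule AE_I2)
      fix t
      show "norm (indicator {0<..<1} t * (f t * \<phi> t)) \<le> norm (B * (indicator {0<..<1} t * f t))"
      proof (cases "t \<in> {0<..<1}")
        case True
        then have "\<bar>\<phi> t\<bar> \<le> B" using B by auto
        then have "\<bar>f t\<bar> * \<bar>\<phi> t\<bar> \<le> \<bar>f t\<bar> * B" by (intro mult_left_mono) auto
        moreover have "B \<ge> 0"
        proof -
          have "norm (\<phi> 0) \<le> B" using B by auto
          then show ?thesis by (meson norm_ge_zero order_trans)
        qed
        ultimately show ?thesis using True by (simp add: abs_mult mult_ac)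
      qed simp
    qed
  qed
  then show ?thesis unfolding set_integrable_def by simp
qed

lemma set_int_to_HK:
  fixes f :: "real \<Rightarrow> real"
  assumes "set_integrable lborel {0<..<1} f"
  shows "f integrable_on {0..1}" "(LINT t:{0<..<1}|lborel. f t) = integral {0..1} f"
  using set_borel_integral_eq_integral[OF assms] integrable_on_open_interval_real[of f 0 1]
    integral_open_interval_real[of 0 1 f] by auto

context setting2
begin

lemma split_int:
  fixes F :: "real \<Rightarrow> real"
  assumes F: "F integrable_on {0..1}"
  shows "integral {0..1} F = (\<Sum>i\<le>N. integral {x i..x (Suc i)} F)"
proof -
  have "n \<le> N \<longrightarrow> integral {x 0..x (Suc n)} F = (\<Sum>i\<le>n. integral {x i..x (Suc i)} F)" for n
  proof (induction n)
    case 0 then show ?case by simp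
  next
    case (Suc n)
    show ?case
    proof
      assume n: "Suc n \<le> N"
      have sub: "{x 0..x (Suc (Suc n))} \<subseteq> {0..1}" using x01[of 0] x01[of "Suc (Suc n)"] n by auto
      have "integral {x 0..x (Suc n)} F + integral {x (Suc n)..x (Suc (Suc n))} F = integral {x 0..x (Suc (Suc n))} F"
        by (rule Henstock_Kurzweil_Integration.integral_combine)
          (use xle[of 0 "Suc n"] xle[of "Suc n" "Suc (Suc n)"] n integrable_on_subcbox[of F "{0..1}" "x 0" "x (Suc (Suc n))"] F sub in auto)
      then show "integral {x 0..x (Suc (Suc n))} F = (\<Sum>i\<le>Suc n. integral {x i..x (Suc i)} F)"
        using Suc n by simp
    qed
  qed
  from this[of N] show ?thesis using x0 xN by simp
qed

lemma u_cont: "continuous_on {0..1} u"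
  by (rule DERIV_continuous_on) (use u' in auto)

lemma u'_cont: "continuous_on {0..1} u'"
  by (rule DERIV_continuous_on) (use u'' in auto)

lemma e_cont: "continuous_on {0..1} e"
  unfolding e_def[abs_def] by (intro continuous_intros u_cont uI_cont)

lemma ell_int: "integrable lborel ell"
  unfolding ell_def[abs_def]
  by (intro Bochner_Integration.integrable_sum Bochner_Integration.integrable_mult_right integrable_real_indicator)
    (use xmono in \<open>auto simp: emeasure_lborel_Ico less_imp_le\<close>)

lemma g0_set_int: "set_integrable lborel {0<..<1} g0"
proof -
  have "set_integrable lborel {0<..<1} u'" by (rule set_int_cont01[OF u'_cont])
  moreover have "set_integrable lborel {0<..<1} ell"
    unfolding set_integrable_def
    by (rule integrable_mult_indicator) (use ell_int in auto)
  ultimately show ?thesis unfolding g0_def[abs_def] by (rule set_integral_diff(1))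
qed

lemma e_set_int: "set_integrable lborel {0<..<1} e"
  by (rule set_int_cont01[OF e_cont])

lemma e_nodes: "i \<le> N + 1 \<Longrightarrow> e (x i) = 0"
  using uI_nodes by (simp add: e_def)

lemma e_deriv:
  assumes i: "i \<le> N" and t: "t \<in> {x i<..<x (Suc i)}"
  shows "(e has_real_derivative g0 t) (at t)"
proof -
  have t01: "t \<in> {0<..<1}" using t x01[of i] x01[of "Suc i"] i by auto
  have du: "(u has_real_derivative u' t) (at t)"
  proof -
    have "(u has_real_derivative u' t) (at t within {0..1})" using u' t01 by auto
    moreover have "at t within {0..1} = at t" using t01 by (intro at_within_interior) auto
    ultimately show ?thesis by simp
  qed
  have duI: "(uI has_real_derivative sl i) (at t)"
  proof (rule has_field_derivative_transform_within_open[where S="{x i<..<x (Suc i)}"])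
    show "((\<lambda>s. u (x i) + sl i * (s - x i)) has_real_derivative sl i) (at t)"
      by (auto intro!: derivative_eq_intros)
    show "\<And>s. s \<in> {x i<..<x (Suc i)} \<Longrightarrow> u (x i) + sl i * (s - x i) = uI s"
      using uI_on[OF i] by auto
  qed (use t in auto)
  have "g0 t = u' t - sl i" unfolding g0_def using ell_on[OF i] t by auto
  then show ?thesis unfolding e_def[abs_def] using DERIV_diff[OF du duI] by simp
qed

lemma weak_deriv_e: "is_weak_deriv_01 e g0"
  unfolding is_weak_deriv_01_def
proof (intro conjI allI impI)
  show "set_integrable lborel {0<..<1} e" by (rule e_set_int)
  show "set_integrable lborel {0<..<1} g0" by (rule g0_set_int)
  fix \<phi> assume \<phi>: "test_fun_01 \<phi>"
  have dphi: "(\<phi> has_real_derivative deriv \<phi> t) (at t)" for t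
    using \<phi> unfolding test_fun_01_def
    by (metis DERIV_deriv_iff_real_differentiable funpow_0)
  have cphi: "continuous_on UNIV \<phi>"
    using dphi by (meson DERIV_isCont continuous_at_imp_continuous_on)
  have cdphi: "continuous_on UNIV (deriv \<phi>)"
  proof -
    have "deriv \<phi> differentiable (at t)" for t
      using \<phi> unfolding test_fun_01_def by (metis funpow_0 funpow_Suc_right o_apply)
    then show ?thesis
      by (meson continuous_at_imp_continuous_on differentiable_imp_continuous_within)
  qed
  have s1: "set_integrable lborel {0<..<1} (\<lambda>t. e t * deriv \<phi> t)"
    by (rule set_int_mult_cont[OF e_set_int cdphi])
  have s2: "set_integrable lborel {0<..<1} (\<lambda>t. g0 t * \<phi> t)"
    by (rule set_int_mult_cont[OF g0_set_int cphi])
  note h1 = set_int_to_HK[OF s1] and h2 = set_int_to_HK[OF s2]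
  have piece: "integral {x i..x (Suc i)} (\<lambda>t. e t * deriv \<phi> t) = - integral {x i..x (Suc i)} (\<lambda>t. g0 t * \<phi> t)"
    if i: "i \<le> N" for i
  proof -
    let ?a = "x i" and ?b = "x (Suc i)"
    have ab: "?a \<le> ?b" using xmono i by (auto intro: less_imp_le)
    have sub: "{?a..?b} \<subseteq> {0..1}" using x01[of i] x01[of "Suc i"] i by auto
    define I where "I = integral {?a..?b} (\<lambda>t. e t * deriv \<phi> t)"
    have "((\<lambda>t. e t * deriv \<phi> t) has_integral I) {?a..?b}"
      unfolding I_def using integrable_on_subinterval[OF h1(1) sub] by (rule integrable_integral)
    then have pre: "((\<lambda>t. e t * deriv \<phi> t) has_integral (e ?b * \<phi> ?b - e ?a * \<phi> ?a - (- I))) {?a..?b}"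
      using e_nodes[of i] e_nodes[of "Suc i"] i by simp
    have "((\<lambda>t. g0 t * \<phi> t) has_integral - I) {?a..?b}"
    proof (rule integration_by_parts_interior[OF bounded_bilinear_mult ab _ _ _ _ pre])
      show "continuous_on {?a..?b} e" using continuous_on_subset[OF e_cont sub] .
      show "continuous_on {?a..?b} \<phi>" using continuous_on_subset[OF cphi] by blast
      show "\<And>t. t \<in> {?a<..<?b} \<Longrightarrow> (e has_vector_derivative g0 t) (at t)"
        using e_deriv[OF i] by (simp add: has_real_derivative_iff_has_vector_derivative)
      show "\<And>t. t \<in> {?a<..<?b} \<Longrightarrow> (\<phi> has_vector_derivative deriv \<phi> t) (at t)"
        using dphi by (simp add: has_real_derivative_iff_has_vector_derivative)
    qed
    then show ?thesis unfolding I_def by (simp add: integral_unique)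
  qed
  have "(LINT t:{0<..<1}|lborel. e t * deriv \<phi> t) = (\<Sum>i\<le>N. integral {x i..x (Suc i)} (\<lambda>t. e t * deriv \<phi> t))"
    using h1 split_int[OF h1(1)] by simp
  also have "\<dots> = (\<Sum>i\<le>N. - integral {x i..x (Suc i)} (\<lambda>t. g0 t * \<phi> t))"
    using piece by simp
  also have "\<dots> = - (LINT t:{0<..<1}|lborel. g0 t * \<phi> t)"
    using h2 split_int[OF h2(1)] by (simp add: sum_negf)
  finally show "(LINT t:{0<..<1}|lborel. e t * deriv \<phi> t) = - (LINT t:{0<..<1}|lborel. g0 t * \<phi> t)" .
qed

end

lemma pow_diff_le:
  fixes m :: real and q :: nat
  assumes "m \<ge> 0"
  shows "(m + 1)^(q + 1) - m^(q + 1) \<le> real (q + 1) * (m + 1)^q"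
proof -
  have "1 + real (q + 1) * (- 1 / (m + 1)) \<le> (1 + (- 1 / (m + 1)))^(q + 1)"
    by (rule Bernoulli_inequality) (use assms in \<open>simp add: field_simps\<close>)
  also have "1 + (- 1 / (m + 1)) = m / (m + 1)" using assms by (simp add: field_simps)
  finally have "1 - real (q + 1) / (m + 1) \<le> (m / (m + 1))^(q + 1)" by simp
  then have "(1 - real (q + 1) / (m + 1)) * (m + 1)^(q + 1) \<le> (m / (m + 1))^(q + 1) * (m + 1)^(q + 1)"
    by (rule mult_right_mono) (use assms in simp)
  also have "(m / (m + 1))^(q + 1) * (m + 1)^(q + 1) = m^(q+1)"
    using assms by (simp add: power_divide)
  also have "(1 - real (q + 1) / (m + 1)) * (m + 1)^(q + 1) = (m + 1)^(q + 1) - real (q + 1) * (m + 1)^q"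
  proof -
    have "(m + 1)^(q + 1) = (m + 1) * (m + 1)^q" by simp
    moreover have "real (q + 1) / (m + 1) * ((m + 1) * (m + 1)^q) = real (q + 1) * (m + 1)^q"
      using assms by simp
    ultimately show ?thesis by (simp add: left_diff_distrib)
  qed
  finally show ?thesis by simp
qed

lemma sum_pow_lower:
  fixes q :: nat
  shows "(\<Sum>k=1..m. real k ^ q) \<ge> real m ^ (q + 1) / real (q + 1)"
proof (induction m)
  case 0 then show ?case by simp
next
  case (Suc m)
  have E: "real (Suc m) ^ (q + 1) / real (q + 1) = real m ^ (q + 1) / real (q + 1) + ((real m + 1)^(q+1) - real m ^(q+1)) / real (q+1)"
    by (simp add: diff_divide_distrib add.commute)
  have L: "((real m + 1)^(q+1) - real m ^(q+1)) / real (q+1) \<le> (real m + 1)^q"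
    using pow_diff_le[of "real m" q] by (simp add: divide_le_eq mult.commute del: of_nat_Suc)
  have "real (Suc m) ^ (q + 1) / real (q + 1) \<le> (\<Sum>k=1..m. real k ^ q) + real (Suc m) ^ q"
    using E L Suc by (simp add: add.commute)
  also have "\<dots> = (\<Sum>k=1..Suc m. real k ^ q)" by simp
  finally show ?case .
qed

lemma S_star_lower:
  assumes "n \<ge> 1"
  shows "S_star p n \<ge> (real n - 1) ^ (p + 2) / real (p + 2)"
proof -
  have "{1..<n} = {1..n-1}" using assms by auto
  then have "S_star p n = (\<Sum>k=1..n-1. real k ^ (p + 1))" by (simp add: S_star_def)
  also have "\<dots> \<ge> real (n-1) ^ (p + 1 + 1) / real (p + 1 + 1)" by (rule sum_pow_lower)
  finally show ?thesis using assms by (simp add: of_nat_diff)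
qed

lemma sum_cubes: "4 * (\<Sum>k=1..m. real k ^ 3) = (real m * (real m + 1))^2"
  by (induction m) (simp_all add: power2_eq_square power3_eq_cube algebra_simps)

lemma S_star_2:
  assumes "n \<ge> 1"
  shows "4 * S_star 2 n = ((real n - 1) * real n)^2"
proof -
  have "{1..<n} = {1..n-1}" using assms by auto
  then have "S_star 2 n = (\<Sum>k=1..n-1. real k ^ 3)" by (simp add: S_star_def)
  then show ?thesis using sum_cubes[of "n-1"] assms by (simp add: of_nat_diff)
qed

lemma pow2_ge6: "p \<ge> 6 \<Longrightarrow> (2::nat)^p \<ge> 8 * (p + 2)"
proof (induction p rule: dec_induct)
  case base then show ?case by simp
next
  case (step p) then show ?case by simp
qed

lemma pow2_ge3: "p \<ge> 3 \<Longrightarrow> 5 * (2::nat)^p \<ge> 8 * (p + 2)"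
proof (induction p rule: dec_induct)
  case base then show ?case by simp
next
  case (step p) then show ?case by simp
qed

lemma key_big:
  fixes p :: nat and r :: real
  assumes p: "p \<ge> 1" and r: "r \<ge> 2"
  assumes A: "2 ^ p * (r - 1)^3 \<ge> real (p + 2) * r^3"
  shows "r ^ (2 * p + 1) \<le> (r + 2) ^ (p - 1) * (2 ^ p * ((r - 1) ^ (p + 2) / real (p + 2)))"
proof -
  have "(r^2)^(p-1) \<le> ((r + 2) * (r - 1))^(p-1)"
    by (rule power_mono) (use r in \<open>auto simp: power2_eq_square algebra_simps\<close>)
  moreover have "r^3 \<le> 2 ^ p * (r - 1)^3 / real (p + 2)"
    using A by (simp add: field_simps)
  ultimately have M: "(r^2)^(p-1) * r^3 \<le> ((r + 2) * (r - 1))^(p-1) * (2 ^ p * (r - 1)^3 / real (p + 2))"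
    by (rule mult_mono) (use r in auto)
  have E1: "(r^2)^(p-1) * r^3 = r ^ (2 * p + 1)"
  proof -
    have "(r^2)^(p-1) * r^3 = r^(2*(p-1) + 3)" by (simp add: power_mult power_add)
    also have "2*(p-1) + 3 = 2 * p + 1" using p by simp
    finally show ?thesis .
  qed
  have E2: "((r + 2) * (r - 1))^(p-1) * (2 ^ p * (r - 1)^3 / real (p + 2))
      = (r + 2) ^ (p - 1) * (2 ^ p * ((r - 1) ^ (p + 2) / real (p + 2)))"
  proof -
    have "(r - 1)^(p-1) * (r - 1)^3 = (r - 1)^(p + 2)"
      using p by (simp add: power_add[symmetric])
    have "((r + 2) * (r - 1))^(p-1) * (2 ^ p * (r - 1)^3 / real (p + 2))
        = (r + 2)^(p-1) * (2 ^ p * ((r - 1)^(p-1) * (r - 1)^3) / real (p + 2))"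
      by (simp only: power_mult_distrib times_divide_eq_right mult_ac)
    then show ?thesis using \<open>(r - 1)^(p-1) * (r - 1)^3 = (r - 1)^(p + 2)\<close>
      by (simp only: times_divide_eq_right)
  qed
  show ?thesis using M unfolding E1 E2 .
qed

lemma key_const:
  fixes p n :: nat
  assumes p: "p \<ge> 2" and n: "n \<ge> 1"
  shows "real n ^ (2 * p + 1) \<le> real (n + 2) ^ (p - 1) * (real n ^ (p + 1) + 2 ^ p * S_star p n)"
proof -
  define r where "r = real n"
  have S0: "S_star p n \<ge> 0" unfolding S_star_def by (intro sum_nonneg) auto
  consider "n = 1" | "p = 2" "n \<ge> 2" | "p \<ge> 3" "n \<ge> 2" using p n by linarith
  then show ?thesis
  proof cases
    case 1
    then have "S_star p n = 0" by (simp add: S_star_def)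
    then show ?thesis using 1 by simp
  next
    case 2
    have S: "2 ^ p * S_star p n = ((r - 1) * r)^2" using S_star_2[OF n] 2 by (simp add: r_def)
    have "r ^ (2 * p + 1) + r^2 * (r^2 - r + 2) = (r + 2) * (r^3 + ((r - 1) * r)^2)"
      using 2 by (simp add: power2_eq_square power3_eq_cube algebra_simps numeral_eq_Suc)
    moreover have "r^2 * (r^2 - r + 2) \<ge> 0"
    proof -
      have "r^2 - r + 2 \<ge> 0" using 2 by (simp add: r_def power2_eq_square)
      then show ?thesis by simp
    qed
    ultimately have "r ^ (2 * p + 1) \<le> (r + 2) * (r^3 + ((r - 1) * r)^2)" by linarith
    moreover have e1: "real (n + 2) ^ (p - 1) = r + 2" using 2 by (simp add: r_def)
    moreover have e2: "r ^ (p + 1) = r^3" using 2 by simp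
    ultimately show ?thesis unfolding r_def[symmetric] e1 e2 S by simp
  next
    case 3
    have r2: "r \<ge> 2" using 3 by (simp add: r_def)
    have Sl: "S_star p n \<ge> (r - 1) ^ (p + 2) / real (p + 2)" using S_star_lower[OF n] by (simp add: r_def)
    have goal: "r ^ (2 * p + 1) \<le> real (n + 2) ^ (p - 1) * (r ^ (p + 1) + 2 ^ p * ((r - 1) ^ (p + 2) / real (p + 2)))"
    proof (cases "p \<ge> 6 \<or> n \<ge> 7")
      case True
      have A: "2 ^ p * (r - 1)^3 \<ge> real (p + 2) * r^3"
      proof (cases "p \<ge> 6")
        case True
        have "real (8 * (p + 2)) \<le> real (2^p)" using pow2_ge6[OF True] by linarith
        then have P: "8 * real (p + 2) \<le> 2 ^ p" by simp
        have "r^3 \<le> 8 * (r - 1)^3"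
        proof -
          have "r \<le> 2 * (r - 1)" using r2 by simp
          then have "r^3 \<le> (2 * (r - 1))^3" by (rule power_mono) (use r2 in auto)
          moreover have "(2 * (r - 1))^3 = 8 * (r - 1)^3" unfolding power_mult_distrib by simp
          ultimately show ?thesis by simp
        qed
        then have "real (p + 2) * r^3 \<le> real (p + 2) * (8 * (r - 1)^3)" by (rule mult_left_mono) simp
        also have "\<dots> = (8 * real (p + 2)) * (r - 1)^3" by simp
        also have "\<dots> \<le> 2 ^ p * (r - 1)^3" by (rule mult_right_mono[OF P]) (use r2 in simp)
        finally show ?thesis .
      next
        case False
        with True have n7: "n \<ge> 7" by simp
        have "real (8 * (p + 2)) \<le> real (5 * 2^p)" using pow2_ge3 3 by (metis of_nat_le_iff)
        then have P: "8 * real (p + 2) \<le> 5 * 2 ^ p" by simp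
        obtain m where m: "n = m + 7" using n7 by (metis add.commute le_Suc_ex)
        have "5 * r^3 \<le> 8 * (r - 1)^3"
        proof -
          have "8 * (r - 1)^3 - 5 * r^3 = 3 * real m^3 + 39 * real m^2 + 129 * real m + 13"
            unfolding r_def m by (simp add: power2_eq_square power3_eq_cube algebra_simps)
          moreover have "3 * real m^3 + 39 * real m^2 + 129 * real m + 13 \<ge> 0" by simp
          ultimately show ?thesis by linarith
        qed
        then have "real (p + 2) * (5 * r^3) \<le> real (p + 2) * (8 * (r - 1)^3)" by (rule mult_left_mono) simp
        then have "5 * (real (p + 2) * r^3) \<le> (8 * real (p + 2)) * (r - 1)^3" by (simp add: algebra_simps)
        also have "\<dots> \<le> (5 * 2 ^ p) * (r - 1)^3" by (rule mult_right_mono[OF P]) (use r2 in simp)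
        finally show ?thesis by simp
      qed
      have "r ^ (2 * p + 1) \<le> (r + 2) ^ (p - 1) * (2 ^ p * ((r - 1) ^ (p + 2) / real (p + 2)))"
        by (rule key_big[OF _ r2 A]) (use 3 in simp)
      also have "\<dots> \<le> (r + 2) ^ (p - 1) * (r ^ (p + 1) + 2 ^ p * ((r - 1) ^ (p + 2) / real (p + 2)))"
        by (rule mult_left_mono) (use r2 in auto)
      also have "(r + 2) = real (n + 2)" by (simp add: r_def)
      finally show ?thesis .
    next
      case False
      then have "p = 3 \<or> p = 4 \<or> p = 5" "n = 2 \<or> n = 3 \<or> n = 4 \<or> n = 5 \<or> n = 6" using 3 by auto
      then show ?thesis unfolding r_def by (elim disjE) (simp_all add: numeral_eq_Suc)
    qed
    also have "\<dots> \<le> real (n + 2) ^ (p - 1) * (r ^ (p + 1) + 2 ^ p * S_star p n)"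
      by (intro mult_left_mono add_left_mono) (use Sl in auto)
    finally show ?thesis by (simp add: r_def)
  qed
qed

lemma abs_powr_nat: "p > 0 \<Longrightarrow> \<bar>y\<bar> powr real p = \<bar>y\<bar> ^ p"
  by (cases "y = 0") (auto simp: powr_realpow)

lemma int_V:
  fixes a b :: real and p :: nat
  assumes ab: "a < b"
  shows "((\<lambda>t. ((b - a) / 4 + \<bar>t - (a + b) / 2\<bar> / 2) ^ p) has_integral
          4 * (((b - a) / 2) ^ (p + 1) - ((b - a) / 4) ^ (p + 1)) / real (p + 1)) {a..b}"
proof -
  define m where "m = (a + b) / 2"
  define c where "c = (b - a) / 4"
  have am: "a \<le> m" "m \<le> b" using ab by (auto simp: m_def)
  define F where "F t = 2 / real (p + 1) * (c + (t - m) / 2) ^ (p + 1)" for t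
  define G where "G t = - (2 / real (p + 1)) * (c + (m - t) / 2) ^ (p + 1)" for t
  have dF: "(F has_vector_derivative (c + (t - m) / 2) ^ p) (at t within {m..b})" for t
  proof -
    have d1: "((\<lambda>t. c + (t - m) / 2) has_real_derivative 1 / 2) (at t within {m..b})"
      by (auto intro!: derivative_eq_intros)
    have "((\<lambda>t. (c + (t - m) / 2) ^ (p + 1)) has_real_derivative real (p + 1) * (1 / 2 * (c + (t - m) / 2) ^ p)) (at t within {m..b})"
      using DERIV_power[OF d1, of "p + 1"] by simp
    from DERIV_cmult[OF this, of "2 / real (p + 1)"]
    have "(F has_real_derivative (c + (t - m) / 2) ^ p) (at t within {m..b})"
      unfolding F_def[abs_def] by (simp del: of_nat_Suc of_nat_add)
    then show ?thesis by (simp add: has_real_derivative_iff_has_vector_derivative)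
  qed
  have dG: "(G has_vector_derivative (c + (m - t) / 2) ^ p) (at t within {a..m})" for t
  proof -
    have d1: "((\<lambda>t. c + (m - t) / 2) has_real_derivative - (1 / 2)) (at t within {a..m})"
      by (auto intro!: derivative_eq_intros)
    have "((\<lambda>t. (c + (m - t) / 2) ^ (p + 1)) has_real_derivative real (p + 1) * (- (1 / 2) * (c + (m - t) / 2) ^ p)) (at t within {a..m})"
      using DERIV_power[OF d1, of "p + 1"] by simp
    from DERIV_cmult[OF this, of "- (2 / real (p + 1))"]
    have "(G has_real_derivative (c + (m - t) / 2) ^ p) (at t within {a..m})"
      unfolding G_def[abs_def] by (simp del: of_nat_Suc of_nat_add)
    then show ?thesis by (simp add: has_real_derivative_iff_has_vector_derivative)
  qed
  have i1: "((\<lambda>t. (c + (t - m) / 2) ^ p) has_integral (F b - F m)) {m..b}"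
    by (rule fundamental_theorem_of_calculus[OF am(2)]) (use dF in auto)
  have i2: "((\<lambda>t. (c + (m - t) / 2) ^ p) has_integral (G m - G a)) {a..m}"
    by (rule fundamental_theorem_of_calculus[OF am(1)]) (use dG in auto)
  have i1': "((\<lambda>t. (c + \<bar>t - m\<bar> / 2) ^ p) has_integral (F b - F m)) {m..b}"
    using i1 by (subst has_integral_cong[where g="\<lambda>t. (c + (t - m) / 2) ^ p"]) auto
  have i2': "((\<lambda>t. (c + \<bar>t - m\<bar> / 2) ^ p) has_integral (G m - G a)) {a..m}"
    using i2 by (subst has_integral_cong[where g="\<lambda>t. (c + (m - t) / 2) ^ p"]) auto
  have "((\<lambda>t. (c + \<bar>t - m\<bar> / 2) ^ p) has_integral (G m - G a + (F b - F m))) {a..b}"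
    by (rule has_integral_combine[OF am i2' i1'])
  moreover have "G m - G a + (F b - F m) = 4 * (((b - a) / 2) ^ (p + 1) - ((b - a) / 4) ^ (p + 1)) / real (p + 1)"
  proof -
    have e1: "c + (b - m) / 2 = (b - a) / 2" and e2: "c + (m - a) / 2 = (b - a) / 2"
      by (auto simp: c_def m_def field_simps)
    define A where "A = ((b - a) / 2) ^ (p + 1)"
    define B where "B = ((b - a) / 4) ^ (p + 1)"
    define k where "k = 2 / real (p + 1)"
    have Fb: "F b = k * A" unfolding F_def A_def k_def e1 ..
    have Fm: "F m = k * B" unfolding F_def B_def k_def c_def by simp
    have Gm: "G m = - k * B" unfolding G_def B_def k_def c_def by simp
    have Ga: "G a = - k * A" unfolding G_def A_def k_def e2 by simp
    have "G m - G a + (F b - F m) = 2 * k * (A - B)" unfolding Fb Fm Gm Ga by (simp add: algebra_simps)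
    also have "\<dots> = 4 * (A - B) / real (p + 1)" unfolding k_def by simp
    finally show ?thesis unfolding A_def B_def .
  qed
  ultimately show ?thesis by (simp add: c_def m_def)
qed

lemma aux_eq: "k * (4 * (y * (d / 2)) / q) = 2 * k * y * d / (q::real)"
  by (simp add: field_simps)

context setting2
begin

lemma const_int01: "(LINT t:{0<..<(1::real)}|lborel. (c::real)) = c"
proof -
  have "set_integrable lborel {0<..<(1::real)} (\<lambda>_. c)" by (rule set_int_cont01) simp
  from set_int_to_HK(2)[OF this] show ?thesis by simp
qed

lemma A_bound:
  assumes p: "p \<ge> 1"
  shows "(LINT t:{0<..<1}|lborel. \<bar>e t\<bar> powr real p) \<le> (K * hh^2 / 8) ^ p"
proof -
  have "(LINT t:{0<..<1}|lborel. \<bar>e t\<bar> powr real p) = (LINT t:{0<..<1}|lborel. \<bar>e t\<bar> ^ p)"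
    by (rule set_lebesgue_integral_cong) (use p in \<open>auto simp: abs_powr_nat\<close>)
  also have "\<dots> \<le> (LINT t:{0<..<(1::real)}|lborel. (K * hh^2 / 8) ^ p)"
  proof (rule set_integral_mono)
    show "set_integrable lborel {0<..<1} (\<lambda>t. \<bar>e t\<bar> ^ p)"
      by (rule set_int_cont01) (intro continuous_intros e_cont)
    show "set_integrable lborel {0<..<(1::real)} (\<lambda>t. (K * hh^2 / 8) ^ p)"
      by (rule set_int_cont01) simp
    fix t :: real assume "t \<in> {0<..<1}"
    then have "\<bar>e t\<bar> \<le> K * hh^2 / 8" by (intro e_bound) auto
    then show "\<bar>e t\<bar> ^ p \<le> (K * hh^2 / 8) ^ p" by (intro power_mono) auto
  qed
  also have "\<dots> = (K * hh^2 / 8) ^ p" by (rule const_int01)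
  finally show ?thesis .
qed

lemma g0_bound01:
  assumes t: "t \<in> {0<..<1}"
  shows "\<bar>g0 t\<bar> \<le> K * hh / 2"
proof -
  obtain i where i: "i \<le> N" "x i \<le> t" "t < x (Suc i)" using locate[of t] t by auto
  have "\<bar>g0 t\<bar> \<le> K * ((x (Suc i) - x i) / 4 + \<bar>t - (x i + x (Suc i)) / 2\<bar> / 2)"
    by (rule g0_bound) (use i in auto)
  also have "\<dots> \<le> K * (hh / 2)"
  proof (rule mult_left_mono[OF _ K_nonneg])
    have a: "t - (x i + x (Suc i)) / 2 \<le> (x (Suc i) - x i) / 2" using i by (simp add: field_simps)
    have b: "- (t - (x i + x (Suc i)) / 2) \<le> (x (Suc i) - x i) / 2" using i by (simp add: field_simps)
    have "\<bar>t - (x i + x (Suc i)) / 2\<bar> \<le> (x (Suc i) - x i) / 2" using a b by (rule abs_leI)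
    then show "(x (Suc i) - x i) / 4 + \<bar>t - (x i + x (Suc i)) / 2\<bar> / 2 \<le> hh / 2"
      using hi_le[OF i(1)] by (simp add: field_simps)
  qed
  finally show ?thesis by simp
qed

lemma telescope: "(\<Sum>i\<le>N. x (Suc i) - x i) = 1"
  using sum_lessThan_telescope[of x "Suc N"] x0 xN by (simp add: lessThan_Suc_atMost)

lemma B_bound:
  assumes p: "p \<ge> 1"
  shows "(LINT t:{0<..<1}|lborel. \<bar>g0 t\<bar> powr real p) \<le> 2 * K ^ p * (hh / 2) ^ p / real (p + 1)"
proof -
  define Gp where "Gp t = \<bar>g0 t\<bar> ^ p" for t
  have eq1: "(LINT t:{0<..<1}|lborel. \<bar>g0 t\<bar> powr real p) = (LINT t:{0<..<1}|lborel. Gp t)"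
    by (rule set_lebesgue_integral_cong) (use p in \<open>auto simp: abs_powr_nat Gp_def\<close>)
  have gi: "integrable lborel (\<lambda>t. indicator {0<..<1} t * g0 t)"
    using g0_set_int unfolding set_integrable_def by simp
  have si: "set_integrable lborel {0<..<1} Gp"
    unfolding set_integrable_def
  proof (rule Bochner_Integration.integrable_bound)
    show "integrable lborel (\<lambda>t. (K * hh / 2) ^ p * indicator {0<..<(1::real)} t)"
      by (intro Bochner_Integration.integrable_mult_right integrable_real_indicator) (auto simp: emeasure_lborel_Ioo)
    have "(\<lambda>t. indicator {0<..<1} t *\<^sub>R Gp t) = (\<lambda>t. \<bar>indicator {0<..<1} t * g0 t\<bar> ^ p)"
      using p by (auto simp: Gp_def indicator_def fun_eq_iff)
    moreover have "(\<lambda>t. \<bar>indicator {0<..<1} t * g0 t\<bar> ^ p) \<in> borel_measurable lborel"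
      using borel_measurable_integrable[OF gi] by measurable
    ultimately show "(\<lambda>t. indicator {0<..<1} t *\<^sub>R Gp t) \<in> borel_measurable lborel" by simp
    show "AE t in lborel. norm (indicator {0<..<1} t *\<^sub>R Gp t) \<le> norm ((K * hh / 2) ^ p * indicator {0<..<(1::real)} t)"
    proof (rule AE_I2)
      fix t
      show "norm (indicator {0<..<1} t *\<^sub>R Gp t) \<le> norm ((K * hh / 2) ^ p * indicator {0<..<(1::real)} t)"
      proof (cases "t \<in> {0<..<1}")
        case True
        have "\<bar>g0 t\<bar> ^ p \<le> (K * hh / 2) ^ p" by (intro power_mono g0_bound01 True) simp
        then show ?thesis using True by (simp add: Gp_def)
      qed simp
    qed
  qed
  note hk = set_int_to_HK[OF si]
  have piece: "integral {x i..x (Suc i)} Gp \<le> 2 * K ^ p * (hh / 2) ^ p * (x (Suc i) - x i) / real (p + 1)"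
    if i: "i \<le> N" for i
  proof -
    let ?a = "x i" and ?b = "x (Suc i)"
    define V where "V t = ((?b - ?a) / 4 + \<bar>t - (?a + ?b) / 2\<bar> / 2) ^ p" for t
    have ab: "?a < ?b" using xmono i by auto
    have sub: "{?a..?b} \<subseteq> {0..1}" using x01[of i] x01[of "Suc i"] i by auto
    have intV: "(V has_integral 4 * (((?b - ?a) / 2) ^ (p + 1) - ((?b - ?a) / 4) ^ (p + 1)) / real (p + 1)) {?a..?b}"
      unfolding V_def by (rule int_V[OF ab])
    have KV: "((\<lambda>t. K ^ p * V t) has_integral K ^ p * (4 * (((?b - ?a) / 2) ^ (p + 1) - ((?b - ?a) / 4) ^ (p + 1)) / real (p + 1))) {?a..?b}"
      using has_integral_mult_right[OF intV] by simp
    have "integral {?a..?b} Gp = integral {?a<..<?b} Gp" by (rule integral_open_interval_real)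
    also have "\<dots> \<le> integral {?a<..<?b} (\<lambda>t. K ^ p * V t)"
    proof (rule integral_le)
      show "Gp integrable_on {?a<..<?b}"
        using integrable_on_subinterval[OF hk(1) sub] integrable_on_open_interval_real by blast
      show "(\<lambda>t. K ^ p * V t) integrable_on {?a<..<?b}"
        using KV integrable_on_open_interval_real has_integral_integrable by blast
      fix t assume t: "t \<in> {?a<..<?b}"
      have "\<bar>g0 t\<bar> \<le> K * ((?b - ?a) / 4 + \<bar>t - (?a + ?b) / 2\<bar> / 2)"
        by (rule g0_bound[OF i]) (use t in auto)
      then have "\<bar>g0 t\<bar> ^ p \<le> (K * ((?b - ?a) / 4 + \<bar>t - (?a + ?b) / 2\<bar> / 2)) ^ p"
        by (intro power_mono) auto
      then show "Gp t \<le> K ^ p * V t" by (simp add: Gp_def V_def power_mult_distrib)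
    qed
    also have "\<dots> = integral {?a..?b} (\<lambda>t. K ^ p * V t)" by (rule integral_open_interval_real[symmetric])
    also have "\<dots> = K ^ p * (4 * (((?b - ?a) / 2) ^ (p + 1) - ((?b - ?a) / 4) ^ (p + 1)) / real (p + 1))"
      using KV by (rule integral_unique)
    also have "\<dots> \<le> K ^ p * (4 * ((?b - ?a) / 2) ^ (p + 1) / real (p + 1))"
      using K_nonneg ab by (intro mult_left_mono divide_right_mono) auto
    also have "\<dots> \<le> K ^ p * (4 * ((hh / 2) ^ p * ((?b - ?a) / 2)) / real (p + 1))"
    proof -
      have "((?b - ?a) / 2) ^ p \<le> (hh / 2) ^ p" using hi_le[OF i] ab by (intro power_mono) auto
      then have "((?b - ?a) / 2) ^ (p + 1) \<le> (hh / 2) ^ p * ((?b - ?a) / 2)"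
        using ab by (simp add: mult_right_mono mult.commute)
      then show ?thesis using K_nonneg by (intro mult_left_mono divide_right_mono) auto
    qed
    also have "\<dots> = 2 * K ^ p * (hh / 2) ^ p * (?b - ?a) / real (p + 1)" by (rule aux_eq)
    finally show ?thesis .
  qed
  have "(LINT t:{0<..<1}|lborel. \<bar>g0 t\<bar> powr real p) = (\<Sum>i\<le>N. integral {x i..x (Suc i)} Gp)"
    unfolding eq1 hk(2) by (rule split_int[OF hk(1)])
  also have "\<dots> \<le> (\<Sum>i\<le>N. 2 * K ^ p * (hh / 2) ^ p * (x (Suc i) - x i) / real (p + 1))"
    by (rule sum_mono) (use piece in auto)
  also have "\<dots> = 2 * K ^ p * (hh / 2) ^ p / real (p + 1) * (\<Sum>i\<le>N. x (Suc i) - x i)"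
    by (simp add: sum_distrib_left sum_divide_distrib mult_ac)
  also have "\<dots> = 2 * K ^ p * (hh / 2) ^ p / real (p + 1)" by (simp add: telescope)
  finally show ?thesis .
qed

end

lemma set_powr_cong_AE:
  fixes f g :: "real \<Rightarrow> real"
  assumes f: "set_integrable lborel {0<..<1} f" and g: "set_integrable lborel {0<..<1} g"
  assumes ae: "AE t in lborel. t \<in> {0<..<1} \<longrightarrow> f t = g t"
  shows "(LINT t:{0<..<1}|lborel. \<bar>f t\<bar> powr q) = (LINT t:{0<..<1}|lborel. \<bar>g t\<bar> powr q)"
proof -
  have eq: "(LINT t:{0<..<1}|lborel. \<bar>v t\<bar> powr q) = (\<integral>t. \<bar>indicator {0<..<1} t * v t\<bar> powr q \<partial>lborel)" for v :: "real \<Rightarrow> real"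
    unfolding set_lebesgue_integral_def
    by (intro Bochner_Integration.integral_cong) (auto simp: indicator_def)
  have fm: "(\<lambda>t. indicator {0<..<1} t * f t) \<in> borel_measurable lborel"
    using borel_measurable_integrable f unfolding set_integrable_def by fastforce
  have gm: "(\<lambda>t. indicator {0<..<1} t * g t) \<in> borel_measurable lborel"
    using borel_measurable_integrable g unfolding set_integrable_def by fastforce
  show ?thesis unfolding eq
  proof (rule integral_cong_AE)
    show "(\<lambda>t. \<bar>indicator {0<..<1} t * f t\<bar> powr q) \<in> borel_measurable lborel" using fm by measurable
    show "(\<lambda>t. \<bar>indicator {0<..<1} t * g t\<bar> powr q) \<in> borel_measurable lborel" using gm by measurable
    show "AE t in lborel. \<bar>indicator {0<..<1} t * f t\<bar> powr q = \<bar>indicator {0<..<1} t * g t\<bar> powr q"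
      using ae by eventually_elim (auto simp: indicator_def)
  qed
qed

lemma set_powr_nonneg: "0 \<le> (LINT t:A|M. \<bar>v t\<bar> powr (q::real))"
  unfolding set_lebesgue_integral_def
  by (intro Bochner_Integration.integral_nonneg) (auto simp: indicator_def)

lemma aux2: "A > 0 \<Longrightarrow> B > 0 \<Longrightarrow> a > 0 \<Longrightarrow> 1 / (a * A) + 2 * S / (A * B) = (B + 2 * a * S) / (a * (A * B :: real))"
  by (simp add: field_simps)

lemma C_lower:
  fixes p n :: nat
  assumes p: "p \<ge> 2" and n: "n \<ge> 1"
  shows "1 / (real (p + 1) * 2 ^ (p - 1)) \<le>
    real (n + 2) ^ (p - 1) / real (p + 1) * (1 / (2 ^ (p - 1) * real n ^ p) + 2 * S_star p n / real n ^ (2 * p + 1))"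
proof -
  define A where "A = real n ^ p"
  define B where "B = real n ^ (p + 1)"
  define a :: real where "a = 2 ^ (p - 1)"
  define T where "T = real (n + 2) ^ (p - 1)"
  define S where "S = S_star p n"
  have Ap: "A > 0" "B > 0" "a > 0" "T > 0" using n by (auto simp: A_def B_def a_def T_def)
  have nn: "real n ^ (2 * p + 1) = A * B"
    unfolding A_def B_def by (simp add: power_add[symmetric] mult_2)
  have tp: "(2::real) ^ p = 2 * a" unfolding a_def using p
    by (metis Suc_diff_1 le_trans one_le_numeral power_Suc zero_less_one less_le_trans)
  have key: "A * B \<le> T * (B + 2 * a * S)"
    using key_const[OF p n] unfolding nn tp T_def B_def S_def by (simp add: mult.assoc)
  have "1 / (real (p + 1) * a) = (A * B) / (real (p + 1) * a * (A * B))" using Ap by simp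
  also have "\<dots> \<le> (T * (B + 2 * a * S)) / (real (p + 1) * a * (A * B))"
    by (rule divide_right_mono[OF key]) (use Ap in auto)
  also have "\<dots> = T / real (p + 1) * ((B + 2 * a * S) / (a * (A * B)))" by (simp add: field_simps)
  also have "(B + 2 * a * S) / (a * (A * B)) = 1 / (a * A) + 2 * S / (A * B)"
    by (rule aux2[symmetric]) (use Ap in auto)
  finally have F: "1 / (real (p + 1) * a) \<le> T / real (p + 1) * (1 / (a * A) + 2 * S / (A * B))" .
  show ?thesis
    unfolding nn A_def[symmetric] a_def[symmetric] T_def[symmetric] S_def[symmetric] using F .
qed

lemma pow_aux: "real p * real (p + 1) * 2 ^ (p - 1) \<le> 8 ^ p"
proof -
  have "p < 2 ^ p" by (rule less_exp)
  then have a: "real p + 1 \<le> 2 ^ p" by (metis Suc_leI of_nat_Suc of_nat_le_iff of_nat_numeral of_nat_power add.commute)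
  have b: "real p \<le> 2 ^ p" using \<open>p < 2 ^ p\<close> by (metis less_imp_le of_nat_le_iff of_nat_numeral of_nat_power)
  have c: "(2::real) ^ (p - 1) \<le> 2 ^ p" by (rule power_increasing) auto
  have "real p * real (p + 1) * 2 ^ (p - 1) \<le> 2 ^ p * 2 ^ p * 2 ^ p"
    using a b c by (intro mult_mono) (auto simp: add.commute)
  also have "\<dots> = (8::real) ^ p" by (simp add: power_mult_distrib[symmetric])
  finally show ?thesis .
qed

lemma final_arith:
  fixes X Y C K H D :: real and p :: nat
  assumes X: "X \<le> (K * H^2 / 8) ^ p" and Y: "Y \<le> 2 * K ^ p * (H / 2) ^ p / real (p + 1)"
    and C: "1 / (real (p + 1) * 2 ^ (p - 1)) \<le> C" and D: "D \<ge> 0"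
    and K: "K \<ge> 0" and H: "H \<ge> 0" and p: "p \<ge> 2"
  shows "X + Y \<le> C * (H ^ p + H ^ (2 * p) / real p) * K ^ p + D"
proof -
  have c0: "0 < real (p + 1) * 2 ^ (p - 1)" by simp
  have Cp: "C \<ge> 0" using C c0 by (meson divide_nonneg_pos order_trans zero_le_one)
  have X1: "(K * H^2 / 8) ^ p = K ^ p * H ^ (2 * p) * (1 / 8 ^ p)"
    by (simp add: power_mult_distrib power_divide power_mult[symmetric] mult.commute)
  have "1 / 8 ^ p \<le> C / real p"
  proof -
    have "real p * (real (p + 1) * 2 ^ (p - 1)) \<le> 8 ^ p" using pow_aux by (simp add: mult.assoc)
    then have "1 / 8 ^ p \<le> 1 / (real p * (real (p + 1) * 2 ^ (p - 1)))"
      using p by (intro divide_left_mono) auto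
    also have "\<dots> = (1 / (real (p + 1) * 2 ^ (p - 1))) / real p" by simp
    also have "\<dots> \<le> C / real p" using C p by (intro divide_right_mono) auto
    finally show ?thesis .
  qed
  then have "K ^ p * H ^ (2 * p) * (1 / 8 ^ p) \<le> K ^ p * H ^ (2 * p) * (C / real p)"
    using K H by (intro mult_left_mono) auto
  then have XX: "X \<le> C * (H ^ (2 * p) / real p) * K ^ p" using X X1 by (simp add: mult_ac)
  have Y1: "2 * K ^ p * (H / 2) ^ p / real (p + 1) = K ^ p * H ^ p * (1 / (real (p + 1) * 2 ^ (p - 1)))"
  proof -
    have "(2::real) ^ p = 2 * 2 ^ (p - 1)" using p by (metis Suc_diff_1 le_trans one_le_numeral power_Suc zero_less_one less_le_trans)
    then show ?thesis by (simp add: power_divide field_simps)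
  qed
  have "K ^ p * H ^ p * (1 / (real (p + 1) * 2 ^ (p - 1))) \<le> K ^ p * H ^ p * C"
    using K H C by (intro mult_left_mono) auto
  then have YY: "Y \<le> C * H ^ p * K ^ p" using Y Y1 by (simp add: mult_ac)
  have "C * (H ^ p + H ^ (2 * p) / real p) * K ^ p = C * H ^ p * K ^ p + C * (H ^ (2 * p) / real p) * K ^ p"
    by (simp add: algebra_simps)
  then show ?thesis using XX YY D by linarith
qed

theorem theorem2p4:
  fixes p n N :: nat and u u' u'' uI :: "real \<Rightarrow> real" and x :: "nat \<Rightarrow> real"
    and m2 M2 :: real
  assumes p: "p \<ge> 2" and n: "n \<ge> 1"
    and u': "\<forall>t\<in>{0..1}. (u has_real_derivative u' t) (at t within {0..1})"
    and u'': "\<forall>t\<in>{0..1}. (u' has_real_derivative u'' t) (at t within {0..1})"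
    and u''_cont: "continuous_on {0..1} u''"
    and bounds: "\<forall>t\<in>{0..1}. m2 \<le> u'' t \<and> u'' t \<le> M2"
    and x0: "x 0 = 0" and xN: "x (N + 1) = 1"
    and xmono: "\<forall>i\<le>N. x i < x (Suc i)"
    and uI_cont: "continuous_on {0..1} uI"
    and uI_affine: "\<forall>i\<le>N. \<exists>a b. \<forall>t\<in>{x i..x (Suc i)}. uI t = a * t + b"
    and uI_nodes: "\<forall>i\<le>N + 1. uI (x i) = u (x i)"
  defines "h \<equiv> Max ((\<lambda>i. x (Suc i) - x i) ` {0..N})"
    and "u''_sup \<equiv> (SUP t\<in>{0..1}. \<bar>u'' t\<bar>)"
  shows "norm_1p (real p) (\<lambda>t. u t - uI t) powr (real p) \<le>
    real (n + 2) ^ (p - 1) / real (p + 1)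
      * (1 / (2 ^ (p - 1) * real n ^ p) + 2 * S_star p n / real n ^ (2 * p + 1))
      * (h ^ p + h ^ (2 * p) / real p) * u''_sup ^ p
    + 1 / (3 * real n) * (3 / 8) ^ p * (h ^ p + h ^ (2 * p) / real p) * (M2 - m2) ^ p"
proof -
  interpret S: setting2 u u' u'' x N uI
    by unfold_locales (use u' u'' u''_cont x0 xN xmono uI_cont uI_affine uI_nodes in auto)
  have Kdef: "u''_sup = S.K" unfolding u''_sup_def S.K_def ..
  have hdef: "h = S.hh" unfolding h_def S.hh_def ..
  have edef: "(\<lambda>t. u t - uI t) = S.e" by (simp add: S.e_def[abs_def])
  define g where "g = weak_deriv_01 S.e"
  have gw: "is_weak_deriv_01 S.e g"
    unfolding g_def weak_deriv_01_def by (rule someI[of _ S.g0]) (rule S.weak_deriv_e)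
  have ae: "AE t in lborel. t \<in> {0<..<1} \<longrightarrow> g t = S.g0 t"
    by (rule weak_unique[OF gw S.weak_deriv_e])
  have gs: "set_integrable lborel {0<..<1} g" using gw unfolding is_weak_deriv_01_def by simp
  define X where "X = (LINT t:{0<..<1}|lborel. \<bar>S.e t\<bar> powr real p)"
  define Y where "Y = (LINT t:{0<..<1}|lborel. \<bar>g t\<bar> powr real p)"
  have X0: "X \<ge> 0" unfolding X_def by (rule set_powr_nonneg)
  have Y0: "Y \<ge> 0" unfolding Y_def by (rule set_powr_nonneg)
  have pp: "real p > 0" using p by simp
  have rt: "(Z powr (1 / real p)) powr real p = Z" if "Z \<ge> 0" for Z
    using that pp by (simp add: powr_powr powr_one)
  have lhs: "norm_1p (real p) S.e powr real p = X + Y"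
    unfolding norm_1p_def norm_0p_def g_def[symmetric] X_def[symmetric] Y_def[symmetric]
    using rt X0 Y0 by simp
  have Xb: "X \<le> (S.K * S.hh^2 / 8) ^ p" unfolding X_def by (rule S.A_bound) (use p in simp)
  have Yb: "Y \<le> 2 * S.K ^ p * (S.hh / 2) ^ p / real (p + 1)"
  proof -
    have "Y = (LINT t:{0<..<1}|lborel. \<bar>S.g0 t\<bar> powr real p)"
      unfolding Y_def by (rule set_powr_cong_AE[OF gs S.g0_set_int ae])
    also have "\<dots> \<le> 2 * S.K ^ p * (S.hh / 2) ^ p / real (p + 1)" by (rule S.B_bound) (use p in simp)
    finally show ?thesis .
  qed
  have D: "0 \<le> 1 / (3 * real n) * (3 / 8) ^ p * (h ^ p + h ^ (2 * p) / real p) * (M2 - m2) ^ p"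
  proof -
    have "m2 \<le> M2" using bounds by force
    moreover have "h \<ge> 0" using S.hh_pos hdef by simp
    ultimately show ?thesis by (intro mult_nonneg_nonneg) auto
  qed
  have "X + Y \<le> real (n + 2) ^ (p - 1) / real (p + 1)
      * (1 / (2 ^ (p - 1) * real n ^ p) + 2 * S_star p n / real n ^ (2 * p + 1))
      * (S.hh ^ p + S.hh ^ (2 * p) / real p) * S.K ^ p
    + 1 / (3 * real n) * (3 / 8) ^ p * (h ^ p + h ^ (2 * p) / real p) * (M2 - m2) ^ p"
    by (rule final_arith[OF Xb Yb C_lower[OF p n] D S.K_nonneg _ p]) (use S.hh_pos in simp)
  then show ?thesis unfolding edef lhs Kdef hdef .
qed

end
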